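(* Let $X$, $\mathcal{B}$, $\Delta$, $\mathcal{D}(\mathcal{B})$ and $\mu\mapsto\hat\mu$ be as in the context (in particular $\mathcal{B}$ vanishes nowhere on $X$). For every $\mu\in\mathcal{D}(\mathcal{B})$, the image $\hat{\mathcal{B}}=\{\hat f: f\in\mathcal{B}\}$ is dense in $L_2(\Delta,\hat\mu,\mathbb{R})$.
   Context: $X$ is a nonempty set and $\mathcal{B}$ is a real vector space of bounded functions $X\to\mathbb{R}$ closed under pointwise multiplication, pointwise max and min, with $f\wedge1\in\mathcal{B}$ for $f\in\mathcal{B}$. Assume that for every $x\in X$ there is $f\in\mathcal{B}$ with $f(x)\neq0$. $A(\mathcal{B})$ is the supremum-norm closure of $\mathcal{B}+i\mathcal{B}$, a commutative $C^\ast$-algebra; $\Delta$ is its spectrum (nonzero continuous multiplicative linear functionals with the Gelfand topology), locally compact Hausdorff; $\hat a(\varphi)=\varphi(a)$ is the Gelfand transform, an isometric $^\ast$-isomorphism $A(\mathcal{B})\to C_0(\Delta)$; $\hat f\geq0$ iff $f$ is real-valued and $\geq0$. $\sigma(\mathcal{B})$ is the $\sigma$-ring generated by $\mathcal{B}$, and $\mathcal{D}(\mathcal{B})$ is the set of nonnegative measures $\mu$ on $\sigma(\mathcal{B})$ such that every $f\in\mathcal{B}$ is $\mu$-integrable. For $\mu\in\mathcal{D}(\mathcal{B})$: set $I(f)=\int_Xf\,d\mu$ for $f\in\mathcal{B}$; for nonnegative real-valued $f\in A(\mathcal{B})$ set $I(f)=\sup_nI(f_n)$ for any increasing sequence $(f_n)$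 of nonnegative functions in $\mathcal{B}$ converging pointwise to $f$; set $\hat I(\hat f):=I(f)$ for nonnegative $\hat f\in C_0(\Delta)$; $\hat\mu$ is the unique nonnegative Radon measure on $\Delta$ with $\int_\Delta\hat g\,d\hat\mu=\hat I(\hat g)$ for all nonnegative $\hat g\in C_c(\Delta)$. *)

theory Defs
  imports "HOL-Analysis.Analysis"
begin

definition admissible_space :: "('x \<Rightarrow> real) set \<Rightarrow> bool" where
  "admissible_space B \<longleftrightarrow>
     (\<lambda>x. 0) \<in> B \<and>
     (\<forall>f\<in>B. \<forall>g\<in>B. (\<lambda>x. f x + g x) \<in> B) \<and>
     (\<forall>f\<in>B. \<forall>c::real. (\<lambda>x. c * f x) \<in> B) \<and>
     (\<forall>f\<in>B. \<exists>C. \<forall>x. \<bar>f x\<bar> \<le> C) \<and>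
     (\<forall>f\<in>B. \<forall>g\<in>B. (\<lambda>x. f x * g x) \<in> B) \<and>
     (\<forall>f\<in>B. \<forall>g\<in>B. (\<lambda>x. max (f x) (g x)) \<in> B) \<and>
     (\<forall>f\<in>B. \<forall>g\<in>B. (\<lambda>x. min (f x) (g x)) \<in> B) \<and>
     (\<forall>f\<in>B. (\<lambda>x. min (f x) 1) \<in> B) \<and>
     (\<forall>x. \<exists>f\<in>B. f x \<noteq> 0)"

text \<open>The sigma-ring generated by B: the smallest sigma-ring (closed under differences and
  countable unions, containing the empty set) for which every f in B is measurable in the
  sense of sigma-rings, i.e. contains all sets f^{-1}(E), E Borel with 0 not in E.\<close>
definition sigma_ring_of :: "('x \<Rightarrow> real) set \<Rightarrow> 'x set set" where
  "sigma_ring_of B = \<Inter> {R. {} \<in> R \<and>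
       (\<forall>a\<in>R. \<forall>b\<in>R. a - b \<in> R) \<and>
       (\<forall>A::nat \<Rightarrow> 'x set. range A \<subseteq> R \<longrightarrow> (\<Union>i. A i) \<in> R) \<and>
       (\<forall>f\<in>B. \<forall>E\<in>sets borel. (0::real) \<notin> E \<longrightarrow> {x. f x \<in> E} \<in> R)}"

text \<open>Auxiliary: a measure mu on a sigma-ring R over 'x is turned into an Isabelle measure on
  the generated sigma-algebra by giving complements of ring sets measure infinity; this is
  only used to express integrability and integrals of functions in B w.r.t. mu.\<close>
definition ext_measure :: "'x set set \<Rightarrow> ('x set \<Rightarrow> ennreal) \<Rightarrow> 'x measure" where
  "ext_measure R mu = measure_of UNIV (sigma_sets UNIV R) (\<lambda>A. if A \<in> R then mu A else \<infinity>)"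

definition in_D :: "('x \<Rightarrow> real) set \<Rightarrow> ('x set \<Rightarrow> ennreal) \<Rightarrow> bool" where
  "in_D B mu \<longleftrightarrow> positive (sigma_ring_of B) mu \<and> countably_additive (sigma_ring_of B) mu \<and>
     (\<forall>f\<in>B. integrable (ext_measure (sigma_ring_of B) mu) f)"

definition integral_mu :: "('x \<Rightarrow> real) set \<Rightarrow> ('x set \<Rightarrow> ennreal) \<Rightarrow> ('x \<Rightarrow> real) \<Rightarrow> real" where
  "integral_mu B mu f = integral\<^sup>L (ext_measure (sigma_ring_of B) mu) f"

definition cfun :: "('x \<Rightarrow> real) \<Rightarrow> ('x \<Rightarrow> complex)" where
  "cfun f = (\<lambda>x. complex_of_real (f x))"

definition supnorm :: "('x \<Rightarrow> complex) \<Rightarrow> real" where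
  "supnorm a = (SUP x. cmod (a x))"

definition algA :: "('x \<Rightarrow> real) set \<Rightarrow> ('x \<Rightarrow> complex) set" where
  "algA B = {a. \<forall>e>0. \<exists>f\<in>B. \<exists>g\<in>B. \<forall>x. cmod (a x - (complex_of_real (f x) + \<i> * complex_of_real (g x))) \<le> e}"

definition spectrum_of :: "('x \<Rightarrow> real) set \<Rightarrow> (('x \<Rightarrow> complex) \<Rightarrow> complex) set" where
  "spectrum_of B = {\<phi>. \<phi> \<in> extensional (algA B) \<and>
      (\<forall>a\<in>algA B. \<forall>b\<in>algA B. \<phi> (\<lambda>x. a x + b x) = \<phi> a + \<phi> b) \<and>
      (\<forall>a\<in>algA B. \<forall>c. \<phi> (\<lambda>x. c * a x) = c * \<phi> a) \<and>
      (\<forall>a\<in>algA B. \<forall>b\<in>algA B. \<phi> (\<lambda>x. a x * b x) = \<phi> a * \<phi> b) \<and>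
      (\<exists>C. \<forall>a\<in>algA B. cmod (\<phi> a) \<le> C * supnorm a) \<and>
      (\<exists>a\<in>algA B. \<phi> a \<noteq> 0)}"

text \<open>Gelfand (weak-star) topology = topology of pointwise convergence on A(B).\<close>
definition gelfand_top :: "('x \<Rightarrow> real) set \<Rightarrow> (('x \<Rightarrow> complex) \<Rightarrow> complex) topology" where
  "gelfand_top B = subtopology (product_topology (\<lambda>_. euclidean) (algA B)) (spectrum_of B)"

definition borel_of :: "'a topology \<Rightarrow> 'a measure" where
  "borel_of T = sigma (topspace T) {U. openin T U}"

definition radon_on :: "'a topology \<Rightarrow> 'a measure \<Rightarrow> bool" where
  "radon_on T \<nu> \<longleftrightarrow> sets \<nu> = sets (borel_of T) \<and> space \<nu> = topspace T \<and>
     (\<forall>K. compactin T K \<longrightarrow> emeasure \<nu> K < \<infinity>) \<and>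
     (\<forall>E\<in>sets \<nu>. emeasure \<nu> E = (INF U\<in>{U. openin T U \<and> E \<subseteq> U}. emeasure \<nu> U)) \<and>
     (\<forall>U. openin T U \<longrightarrow> emeasure \<nu> U = (SUP K\<in>{K. compactin T K \<and> K \<subseteq> U}. emeasure \<nu> K))"

definition is_hat_measure :: "('x \<Rightarrow> real) set \<Rightarrow> ('x set \<Rightarrow> ennreal) \<Rightarrow> (('x \<Rightarrow> complex) \<Rightarrow> complex) measure \<Rightarrow> bool" where
  "is_hat_measure B mu \<nu> \<longleftrightarrow> radon_on (gelfand_top B) \<nu> \<and>
     (\<forall>g\<in>algA B. (\<forall>x. Im (g x) = 0 \<and> Re (g x) \<ge> 0) \<longrightarrow>
        compactin (gelfand_top B) ((gelfand_top B) closure_of {\<phi>\<in>spectrum_of B. \<phi> g \<noteq> 0}) \<longrightarrow>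
        (\<forall>F::nat \<Rightarrow> 'x \<Rightarrow> real. (\<forall>n. F n \<in> B \<and> (\<forall>x. F n x \<ge> 0)) \<longrightarrow>
           (\<forall>n x. F n x \<le> F (Suc n) x) \<longrightarrow> (\<forall>x. (\<lambda>n. F n x) \<longlonglongrightarrow> Re (g x)) \<longrightarrow>
           (\<integral>\<^sup>+ \<phi>. ennreal (Re (\<phi> g)) \<partial>\<nu>) = (SUP n. ennreal (integral_mu B mu (F n)))))"

end

theory Submission
  imports Defs
begin


locale adm =
  fixes B :: "('x \<Rightarrow> real) set"
  assumes adm: "admissible_space B"
begin

lemma B0: "(\<lambda>x. 0) \<in> B" using adm unfolding admissible_space_def by (elim conjE) blast
lemma Badd: "f \<in> B \<Longrightarrow> g \<in> B \<Longrightarrow> (\<lambda>x. f x + g x) \<in> B" using adm unfolding admissible_space_def by (elim conjE) blast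
lemma Bsmult: "f \<in> B \<Longrightarrow> (\<lambda>x. c * f x) \<in> B" using adm unfolding admissible_space_def by (elim conjE) blast
lemma Bbdd: "f \<in> B \<Longrightarrow> \<exists>C. \<forall>x. \<bar>f x\<bar> \<le> C" using adm unfolding admissible_space_def by (elim conjE) blast
lemma Bmult: "f \<in> B \<Longrightarrow> g \<in> B \<Longrightarrow> (\<lambda>x. f x * g x) \<in> B" using adm unfolding admissible_space_def by (elim conjE) blast
lemma Bmax: "f \<in> B \<Longrightarrow> g \<in> B \<Longrightarrow> (\<lambda>x. max (f x) (g x)) \<in> B" using adm unfolding admissible_space_def by (elim conjE) blast
lemma Bmin: "f \<in> B \<Longrightarrow> g \<in> B \<Longrightarrow> (\<lambda>x. min (f x) (g x)) \<in> B" using adm unfolding admissible_space_def by (elim conjE) blast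
lemma Bmin1: "f \<in> B \<Longrightarrow> (\<lambda>x. min (f x) 1) \<in> B" using adm unfolding admissible_space_def by (elim conjE) blast
lemma Bnz: "\<exists>f\<in>B. f x \<noteq> 0" using adm unfolding admissible_space_def by (elim conjE) blast

lemma Bdiff: "f \<in> B \<Longrightarrow> g \<in> B \<Longrightarrow> (\<lambda>x. f x - g x) \<in> B"
proof -
  assume "f \<in> B" "g \<in> B"
  then have "(\<lambda>x. f x + (\<lambda>x. (-1) * g x) x) \<in> B" by (intro Badd Bsmult)
  then show ?thesis by simp
qed

lemma Babs: "f \<in> B \<Longrightarrow> (\<lambda>x. \<bar>f x\<bar>) \<in> B"
proof -
  assume "f \<in> B"
  then have "(\<lambda>x. max (f x) ((\<lambda>x. (-1) * f x) x)) \<in> B" by (intro Bmax Bsmult)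
  moreover have "(\<lambda>x. max (f x) ((\<lambda>x. (-1) * f x) x)) = (\<lambda>x. \<bar>f x\<bar>)" by (auto simp: fun_eq_iff)
  ultimately show ?thesis by simp
qed

lemma Bsum: "finite G \<Longrightarrow> (\<And>j. j \<in> G \<Longrightarrow> F j \<in> B) \<Longrightarrow> (\<lambda>x. \<Sum>j\<in>G. F j x) \<in> B"
proof (induction G rule: finite_induct)
  case empty then show ?case using B0 by simp
next
  case (insert a G)
  then have "(\<lambda>x. F a x + (\<lambda>x. \<Sum>j\<in>G. F j x) x) \<in> B" by (intro Badd) auto
  then show ?case using insert by simp
qed

abbreviation "A \<equiv> algA B"

lemma algA_iff: "a \<in> A \<longleftrightarrow> (\<forall>e>0. \<exists>f\<in>B. \<exists>g\<in>B. \<forall>x. cmod (a x - (complex_of_real (f x) + \<i> * complex_of_real (g x))) \<le> e)"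
  unfolding algA_def by simp

lemma algA_fg: "f \<in> B \<Longrightarrow> g \<in> B \<Longrightarrow> (\<lambda>x. complex_of_real (f x) + \<i> * complex_of_real (g x)) \<in> A"
  unfolding algA_iff by force

lemma cfun_A: "f \<in> B \<Longrightarrow> cfun f \<in> A"
  using algA_fg[of f "\<lambda>x. 0"] B0 by (simp add: cfun_def)

lemma algA_bdd: assumes "a \<in> A" shows "\<exists>M\<ge>0. \<forall>x. cmod (a x) \<le> M"
proof -
  obtain f g where fg: "f \<in> B" "g \<in> B" "\<And>x. cmod (a x - (complex_of_real (f x) + \<i> * complex_of_real (g x))) \<le> 1"
    using assms unfolding algA_iff by (meson zero_less_one)
  obtain C1 where C1: "\<And>x. \<bar>f x\<bar> \<le> C1" using Bbdd fg by blast
  obtain C2 where C2: "\<And>x. \<bar>g x\<bar> \<le> C2" using Bbdd fg by blast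
  have "cmod (a x) \<le> 1 + C1 + C2" for x
  proof -
    have "cmod (a x) \<le> cmod (a x - (complex_of_real (f x) + \<i> * complex_of_real (g x))) + cmod (complex_of_real (f x) + \<i> * complex_of_real (g x))"
      by (metis diff_add_cancel norm_triangle_ineq)
    also have "\<dots> \<le> 1 + (\<bar>f x\<bar> + \<bar>g x\<bar>)"
      using fg(3)[of x] norm_triangle_ineq[of "complex_of_real (f x)" "\<i> * complex_of_real (g x)"]
      by (simp add: norm_mult)
    finally show ?thesis using C1[of x] C2[of x] by linarith
  qed
  moreover have "0 \<le> 1 + C1 + C2" using C1[of undefined] C2[of undefined] by linarith
  ultimately show ?thesis by blast
qed

lemma algA_add: assumes "a \<in> A" "b \<in> A" shows "(\<lambda>x. a x + b x) \<in> A"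
  unfolding algA_iff
proof (intro allI impI)
  fix e :: real assume e: "e > 0"
  obtain f g where fg: "f \<in> B" "g \<in> B" "\<And>x. cmod (a x - (complex_of_real (f x) + \<i> * complex_of_real (g x))) \<le> e/2"
    using assms(1) e unfolding algA_iff by (meson half_gt_zero)
  obtain f' g' where fg': "f' \<in> B" "g' \<in> B" "\<And>x. cmod (b x - (complex_of_real (f' x) + \<i> * complex_of_real (g' x))) \<le> e/2"
    using assms(2) e unfolding algA_iff by (meson half_gt_zero)
  have "\<forall>x. cmod (a x + b x - (complex_of_real (f x + f' x) + \<i> * complex_of_real (g x + g' x))) \<le> e"
  proof
    fix x
    have "a x + b x - (complex_of_real (f x + f' x) + \<i> * complex_of_real (g x + g' x)) =
      (a x - (complex_of_real (f x) + \<i> * complex_of_real (g x))) + (b x - (complex_of_real (f' x) + \<i> * complex_of_real (g' x)))"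
      by (simp add: algebra_simps)
    then have "cmod (a x + b x - (complex_of_real (f x + f' x) + \<i> * complex_of_real (g x + g' x))) \<le>
      cmod (a x - (complex_of_real (f x) + \<i> * complex_of_real (g x))) + cmod (b x - (complex_of_real (f' x) + \<i> * complex_of_real (g' x)))"
      by (simp only: norm_triangle_ineq)
    then show "cmod (a x + b x - (complex_of_real (f x + f' x) + \<i> * complex_of_real (g x + g' x))) \<le> e"
      using fg(3)[of x] fg'(3)[of x] by linarith
  qed
  then show "\<exists>f\<in>B. \<exists>g\<in>B. \<forall>x. cmod (a x + b x - (complex_of_real (f x) + \<i> * complex_of_real (g x))) \<le> e"
    apply - apply (rule bexI[where x="\<lambda>x. f x + f' x"]) apply (rule bexI[where x="\<lambda>x. g x + g' x"])
    using fg fg' by (auto intro: Badd)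
qed

lemma algA_smult: assumes "a \<in> A" shows "(\<lambda>x. c * a x) \<in> A"
  unfolding algA_iff
proof (intro allI impI)
  fix e :: real assume e: "e > 0"
  define d where "d = e / (cmod c + 1)"
  have d: "d > 0" unfolding d_def using e by (intro divide_pos_pos) (auto intro: add_nonneg_pos)
  obtain f g where fg: "f \<in> B" "g \<in> B" "\<And>x. cmod (a x - (complex_of_real (f x) + \<i> * complex_of_real (g x))) \<le> d"
    using assms(1) d unfolding algA_iff by meson
  define p where "p = Re c" define q where "q = Im c"
  have "\<forall>x. cmod (c * a x - (complex_of_real (p * f x - q * g x) + \<i> * complex_of_real (q * f x + p * g x))) \<le> e"
  proof
    fix x
    have "c * a x - (complex_of_real (p * f x - q * g x) + \<i> * complex_of_real (q * f x + p * g x)) =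
       c * (a x - (complex_of_real (f x) + \<i> * complex_of_real (g x)))"
      unfolding p_def q_def by (simp add: complex_eq_iff algebra_simps)
    then have "cmod (c * a x - (complex_of_real (p * f x - q * g x) + \<i> * complex_of_real (q * f x + p * g x))) \<le> cmod c * d"
      using fg(3)[of x] by (simp add: norm_mult mult_left_mono)
    also have "\<dots> \<le> e"
    proof -
      have h: "0 < cmod c + 1" using norm_ge_zero[of c] by linarith
      have "cmod c / (cmod c + 1) \<le> 1" using h by (simp add: divide_le_eq_1_pos)
      then have "e * (cmod c / (cmod c + 1)) \<le> e * 1" using e by (intro mult_left_mono) auto
      moreover have "cmod c * d = e * (cmod c / (cmod c + 1))" unfolding d_def by simp
      ultimately show ?thesis by simp
    qed
    finally show "cmod (c * a x - (complex_of_real (p * f x - q * g x) + \<i> * complex_of_real (q * f x + p * g x))) \<le> e" .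
  qed
  moreover have "(\<lambda>x. p * f x - q * g x) \<in> B" "(\<lambda>x. q * f x + p * g x) \<in> B"
    using fg by (auto intro!: Bdiff Badd Bsmult)
  ultimately show "\<exists>f\<in>B. \<exists>g\<in>B. \<forall>x. cmod (c * a x - (complex_of_real (f x) + \<i> * complex_of_real (g x))) \<le> e"
    apply - apply (rule bexI[where x="\<lambda>x. p * f x - q * g x"]) apply (rule bexI[where x="\<lambda>x. q * f x + p * g x"]) by auto
qed

end

context adm begin

lemma algA_mult: assumes a: "a \<in> A" and b: "b \<in> A" shows "(\<lambda>x. a x * b x) \<in> A"
  unfolding algA_iff
proof (intro allI impI)
  fix e :: real assume e: "e > 0"
  obtain Ma where Ma: "Ma \<ge> 0" "\<And>x. cmod (a x) \<le> Ma" using algA_bdd[OF a] by blast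
  obtain Mb where Mb: "Mb \<ge> 0" "\<And>x. cmod (b x) \<le> Mb" using algA_bdd[OF b] by blast
  define d where "d = min 1 (e / (Ma + Mb + 1))"
  have d: "d > 0" "d \<le> 1" using e Ma Mb unfolding d_def
    by (auto simp: min_def intro!: divide_pos_pos)
  have d3: "d * (Ma + Mb + 1) \<le> e"
  proof -
    have "d \<le> e / (Ma + Mb + 1)" unfolding d_def by simp
    then show ?thesis using Ma Mb by (simp add: le_divide_eq)
  qed
  obtain f g where fg: "f \<in> B" "g \<in> B" "\<And>x. cmod (a x - (complex_of_real (f x) + \<i> * complex_of_real (g x))) \<le> d"
    using a d unfolding algA_iff by meson
  obtain f' g' where fg': "f' \<in> B" "g' \<in> B" "\<And>x. cmod (b x - (complex_of_real (f' x) + \<i> * complex_of_real (g' x))) \<le> d"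
    using b d unfolding algA_iff by meson
  have "\<forall>x. cmod (a x * b x - (complex_of_real (f x * f' x - g x * g' x) + \<i> * complex_of_real (f x * g' x + g x * f' x))) \<le> e"
  proof
    fix x
    define a' where "a' = complex_of_real (f x) + \<i> * complex_of_real (g x)"
    define b' where "b' = complex_of_real (f' x) + \<i> * complex_of_real (g' x)"
    have eq: "complex_of_real (f x * f' x - g x * g' x) + \<i> * complex_of_real (f x * g' x + g x * f' x) = a' * b'"
      unfolding a'_def b'_def by (simp add: complex_eq_iff algebra_simps)
    have "a x * b x - a' * b' = a x * (b x - b') + (a x - a') * b'" by (simp add: algebra_simps)
    then have "cmod (a x * b x - a' * b') \<le> cmod (a x) * cmod (b x - b') + cmod (a x - a') * cmod b'"
      by (metis norm_mult norm_triangle_ineq)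
    moreover have "cmod b' \<le> Mb + 1"
    proof -
      have "cmod b' \<le> cmod (b x) + cmod (b x - b')" by (metis norm_minus_commute norm_triangle_sub)
      then show ?thesis using Mb(2)[of x] fg'(3)[of x] d(2) unfolding b'_def by linarith
    qed
    moreover have "cmod (a x) * cmod (b x - b') \<le> Ma * d"
      using Ma fg'(3)[of x] unfolding b'_def by (intro mult_mono) auto
    moreover have "cmod (a x - a') * cmod b' \<le> d * (Mb + 1)"
      using calculation(2) fg(3)[of x] d unfolding a'_def by (intro mult_mono) auto
    ultimately have "cmod (a x * b x - a' * b') \<le> d * (Ma + Mb + 1)" by (simp add: algebra_simps)
    then show "cmod (a x * b x - (complex_of_real (f x * f' x - g x * g' x) + \<i> * complex_of_real (f x * g' x + g x * f' x))) \<le> e"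
      using d3 unfolding eq by linarith
  qed
  moreover have "(\<lambda>x. f x * f' x - g x * g' x) \<in> B" "(\<lambda>x. f x * g' x + g x * f' x) \<in> B"
    using fg fg' by (auto intro!: Bdiff Badd Bmult)
  ultimately show "\<exists>f\<in>B. \<exists>g\<in>B. \<forall>x. cmod (a x * b x - (complex_of_real (f x) + \<i> * complex_of_real (g x))) \<le> e"
    apply - apply (rule bexI[where x="\<lambda>x. f x * f' x - g x * g' x"]) apply (rule bexI[where x="\<lambda>x. f x * g' x + g x * f' x"]) by auto
qed

lemma algA_diff: "a \<in> A \<Longrightarrow> b \<in> A \<Longrightarrow> (\<lambda>x. a x - b x) \<in> A"
proof -
  assume "a \<in> A" "b \<in> A"
  then have "(\<lambda>x. a x + (\<lambda>x. (-1) * b x) x) \<in> A" by (intro algA_add algA_smult)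
  then show ?thesis by simp
qed

lemma algA_ne: "cfun (\<lambda>x. 0) \<in> A" using cfun_A B0 by blast

abbreviation "\<Delta> \<equiv> spectrum_of B"

lemma phi_add: "\<phi> \<in> \<Delta> \<Longrightarrow> a \<in> A \<Longrightarrow> b \<in> A \<Longrightarrow> \<phi> (\<lambda>x. a x + b x) = \<phi> a + \<phi> b"
  unfolding spectrum_of_def by blast
lemma phi_smult: "\<phi> \<in> \<Delta> \<Longrightarrow> a \<in> A \<Longrightarrow> \<phi> (\<lambda>x. c * a x) = c * \<phi> a"
  unfolding spectrum_of_def by blast
lemma phi_mult: "\<phi> \<in> \<Delta> \<Longrightarrow> a \<in> A \<Longrightarrow> b \<in> A \<Longrightarrow> \<phi> (\<lambda>x. a x * b x) = \<phi> a * \<phi> b"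
  unfolding spectrum_of_def by blast
lemma phi_bound: "\<phi> \<in> \<Delta> \<Longrightarrow> \<exists>C. \<forall>a\<in>A. cmod (\<phi> a) \<le> C * supnorm a"
  unfolding spectrum_of_def by blast
lemma phi_nz: "\<phi> \<in> \<Delta> \<Longrightarrow> \<exists>a\<in>A. \<phi> a \<noteq> 0"
  unfolding spectrum_of_def by blast
lemma phi_ext: "\<phi> \<in> \<Delta> \<Longrightarrow> \<phi> \<in> extensional A"
  unfolding spectrum_of_def by blast
lemma phi_diff: "\<phi> \<in> \<Delta> \<Longrightarrow> a \<in> A \<Longrightarrow> b \<in> A \<Longrightarrow> \<phi> (\<lambda>x. a x - b x) = \<phi> a - \<phi> b"
proof -
  assume h: "\<phi> \<in> \<Delta>" "a \<in> A" "b \<in> A"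
  then have "\<phi> (\<lambda>x. a x + (\<lambda>x. (-1) * b x) x) = \<phi> a + \<phi> (\<lambda>x. (-1) * b x)" by (intro phi_add algA_smult)
  then show ?thesis using phi_smult[OF h(1) h(3), of "-1"] by simp
qed

lemma supnorm_le: "(\<And>x. cmod (a x) \<le> M) \<Longrightarrow> supnorm a \<le> M"
  unfolding supnorm_def by (rule cSUP_least) auto

lemma arch_contra: fixes r M c1 c2 :: real
  assumes "0 \<le> M" "M < r" "c1 > 0" "\<And>n. r ^ n * c1 \<le> c2 * M ^ n" shows False
proof (cases "M = 0")
  case True
  have "r * c1 \<le> 0" using assms(4)[of 1] True by simp
  moreover have "r * c1 > 0" using assms(1,2,3) True by simp
  ultimately show ?thesis by simp
next
  case False
  then have M: "M > 0" using assms by simp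
  have "1 < r / M" using M assms by simp
  then obtain n where n: "c2 / c1 < (r / M) ^ n" using real_arch_pow by blast
  have "r ^ n * c1 \<le> c2 * M ^ n" by fact
  then have "(r / M) ^ n * c1 \<le> c2" using M by (simp add: power_divide field_simps)
  then show False using n assms(3) by (simp add: field_simps)
qed

lemma multiplier:
  assumes phi: "\<phi> \<in> \<Delta>"
    and m: "\<And>b. b \<in> A \<Longrightarrow> (\<lambda>x. m x * b x) \<in> A \<and> \<phi> (\<lambda>x. m x * b x) = \<mu> * \<phi> b"
    and M: "\<And>x. cmod (m x) \<le> M"
  shows "cmod \<mu> \<le> M"
proof (rule ccontr)
  assume H: "\<not> cmod \<mu> \<le> M"
  have M0: "0 \<le> M" using M[of undefined] norm_ge_zero by (meson order_trans)
  obtain a0 where a0: "a0 \<in> A" "\<phi> a0 \<noteq> 0" using phi_nz[OF phi] by blast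
  obtain K where K: "K \<ge> 0" "\<And>x. cmod (a0 x) \<le> K" using algA_bdd[OF a0(1)] by blast
  obtain C where C: "\<And>a. a \<in> A \<Longrightarrow> cmod (\<phi> a) \<le> C * supnorm a" using phi_bound[OF phi] by blast
  define bn where "bn n = (\<lambda>x. m x ^ n * a0 x)" for n
  have bn: "bn n \<in> A \<and> \<phi> (bn n) = \<mu> ^ n * \<phi> a0" for n
  proof (induction n)
    case 0 then show ?case using a0 by (simp add: bn_def)
  next
    case (Suc n)
    have "bn (Suc n) = (\<lambda>x. m x * bn n x)" by (simp add: bn_def fun_eq_iff)
    then show ?case using m[of "bn n"] Suc by simp
  qed
  have "cmod \<mu> ^ n * cmod (\<phi> a0) \<le> (max C 0 * K) * M ^ n" for n
  proof -
    have bnb: "cmod (bn n x) \<le> M ^ n * K" for x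
      unfolding bn_def norm_mult norm_power by (intro mult_mono power_mono M K M0 zero_le_power norm_ge_zero)
    have sn: "supnorm (bn n) \<le> M ^ n * K"
      by (rule supnorm_le) (rule bnb)
    have sn0: "0 \<le> supnorm (bn n)"
    proof -
      have bdd: "bdd_above (range (\<lambda>x. cmod (bn n x)))"
        using bnb by (intro bdd_aboveI[where M="M^n*K"]) auto
      have "cmod (bn n undefined) \<le> supnorm (bn n)" unfolding supnorm_def by (rule cSUP_upper[OF UNIV_I bdd])
      then show ?thesis by (meson norm_ge_zero order_trans)
    qed
    have "cmod \<mu> ^ n * cmod (\<phi> a0) = cmod (\<phi> (bn n))" using bn[of n] by (simp add: norm_mult norm_power)
    also have "\<dots> \<le> C * supnorm (bn n)" using C bn by blast
    also have "\<dots> \<le> max C 0 * supnorm (bn n)" using sn0 by (intro mult_right_mono) auto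
    also have "\<dots> \<le> max C 0 * (M ^ n * K)" using sn by (intro mult_left_mono) auto
    finally show ?thesis by (simp add: algebra_simps)
  qed
  then show False using arch_contra[of M "cmod \<mu>" "cmod (\<phi> a0)" "max C 0 * K"] H M0 a0 by simp
qed

lemma phi_norm: assumes "\<phi> \<in> \<Delta>" "a \<in> A" "\<And>x. cmod (a x) \<le> M" shows "cmod (\<phi> a) \<le> M"
  using multiplier[OF assms(1), of a "\<phi> a" M] assms algA_mult phi_mult by blast

end

context adm begin

lemma shift_bound:
  assumes phi: "\<phi> \<in> \<Delta>" and f: "f \<in> B" and lh: "\<And>x. lo \<le> f x \<and> f x \<le> hi" 
  shows "(Re (\<phi> (cfun f)) - (lo+hi)/2)\<^sup>2 + (Im (\<phi> (cfun f)) + t)\<^sup>2 \<le> ((hi-lo)/2)\<^sup>2 + t\<^sup>2"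
proof -
  define mid where "mid = (lo+hi)/2"
  define c0 where "c0 = Complex (- mid) t"
  define M where "M = sqrt (((hi-lo)/2)\<^sup>2 + t\<^sup>2)"
  have m: "(\<lambda>x. (c0 + cfun f x) * b x) \<in> A \<and> \<phi> (\<lambda>x. (c0 + cfun f x) * b x) = (c0 + \<phi> (cfun f)) * \<phi> b"
    if b: "b \<in> A" for b
  proof -
    have eq: "(\<lambda>x. (c0 + cfun f x) * b x) = (\<lambda>x. (\<lambda>x. c0 * b x) x + (\<lambda>x. cfun f x * b x) x)"
      by (simp add: fun_eq_iff algebra_simps)
    have 1: "(\<lambda>x. c0 * b x) \<in> A" using b algA_smult by blast
    have 2: "(\<lambda>x. cfun f x * b x) \<in> A" using b f cfun_A algA_mult by blast
    show ?thesis unfolding eq using 1 2 phi_add[OF phi 1 2] phi_smult[OF phi b] phi_mult[OF phi cfun_A[OF f] b]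
      algA_add[OF 1 2] by (simp add: algebra_simps)
  qed
  have bd: "cmod (c0 + cfun f x) \<le> M" for x
  proof -
    have "c0 + cfun f x = Complex (f x - (lo+hi)/2) t" by (simp add: c0_def cfun_def complex_eq_iff mid_def field_simps)
    then have "cmod (c0 + cfun f x) = sqrt ((f x - (lo+hi)/2)\<^sup>2 + t\<^sup>2)"
      by (simp add: cmod_def)
    also have "\<dots> \<le> M" unfolding M_def
    proof (intro real_sqrt_le_mono add_right_mono)
      have l1: "lo \<le> f x" and h1: "f x \<le> hi" using lh[of x] by auto
      have z1: "-((hi-lo)/2) \<le> f x - (lo+hi)/2" using l1 h1 by (simp add: field_simps)
      have z2: "f x - (lo+hi)/2 \<le> (hi-lo)/2" using l1 h1 by (simp add: field_simps)
      note z = z1 z2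
      then have R0: "0 \<le> (hi-lo)/2" using l1 h1 by simp
      have "\<bar>f x - (lo+hi)/2\<bar> \<le> (hi-lo)/2" unfolding abs_le_iff using z by (intro conjI; linarith)
      then have "\<bar>f x - (lo+hi)/2\<bar> \<le> \<bar>(hi-lo)/2\<bar>" using R0 by simp
      then show "(f x - (lo+hi)/2)\<^sup>2 \<le> ((hi-lo)/2)\<^sup>2" using abs_le_square_iff by blast
    qed
    finally show ?thesis .
  qed
  have "cmod (c0 + \<phi> (cfun f)) \<le> M" by (rule multiplier[OF phi m bd]) auto
  then have "(cmod (c0 + \<phi> (cfun f)))\<^sup>2 \<le> M\<^sup>2" by (intro power_mono) auto
  also have "M\<^sup>2 = ((hi-lo)/2)\<^sup>2 + t\<^sup>2" unfolding M_def by simp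
  finally have "(cmod (c0 + \<phi> (cfun f)))\<^sup>2 \<le> ((hi-lo)/2)\<^sup>2 + t\<^sup>2" .
  moreover have "(cmod (c0 + \<phi> (cfun f)))\<^sup>2 = (Re (\<phi> (cfun f)) - mid)\<^sup>2 + (Im (\<phi> (cfun f)) + t)\<^sup>2"
    unfolding cmod_power2 c0_def by (simp add: algebra_simps)
  ultimately show ?thesis unfolding mid_def by simp
qed

lemma phi_real_range:
  assumes phi: "\<phi> \<in> \<Delta>" and f: "f \<in> B" and lh: "\<And>x. lo \<le> f x \<and> f x \<le> hi"
  shows "Im (\<phi> (cfun f)) = 0" "lo \<le> Re (\<phi> (cfun f))" "Re (\<phi> (cfun f)) \<le> hi"
proof -
  define \<alpha> where "\<alpha> = Re (\<phi> (cfun f))" define \<beta> where "\<beta> = Im (\<phi> (cfun f))"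
  define R where "R = (hi - lo)/2" define m where "m = (lo+hi)/2"
  have H: "(\<alpha> - m)\<^sup>2 + (\<beta> + t)\<^sup>2 \<le> R\<^sup>2 + t\<^sup>2" for t
    using shift_bound[OF phi f lh, of t] unfolding \<alpha>_def \<beta>_def R_def m_def by simp
  show b0: "Im (\<phi> (cfun f)) = 0"
  proof (rule ccontr)
    assume "Im (\<phi> (cfun f)) \<noteq> 0"
    then have b: "\<beta> \<noteq> 0" by (simp add: \<beta>_def)
    define t where "t = (R\<^sup>2 + 1) / (2 * \<beta>)"
    have "2 * \<beta> * t = R\<^sup>2 + 1" using b by (simp add: t_def)
    moreover have "(\<beta> + t)\<^sup>2 = \<beta>\<^sup>2 + 2 * \<beta> * t + t\<^sup>2" by (simp add: power2_eq_square algebra_simps)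
    moreover have "0 \<le> (\<alpha> - m)\<^sup>2" "0 \<le> \<beta>\<^sup>2" by simp_all
    ultimately show False using H[of t] by linarith
  qed
  have "(\<alpha> - m)\<^sup>2 \<le> R\<^sup>2" using H[of 0] b0 by (simp add: \<beta>_def)
  then have "\<bar>\<alpha> - m\<bar> \<le> \<bar>R\<bar>" using abs_le_square_iff[of "\<alpha> - m" R] by simp
  moreover have "lo \<le> hi" using lh[of undefined] by linarith
  ultimately have "\<bar>\<alpha> - m\<bar> \<le> R" unfolding R_def by simp
  then have "\<alpha> - m \<le> R" "m - \<alpha> \<le> R" by (simp_all add: abs_le_iff)
  then have w1: "\<alpha> - (lo+hi)/2 \<le> (hi-lo)/2" and w2: "(lo+hi)/2 - \<alpha> \<le> (hi-lo)/2" unfolding m_def R_def by simp_all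
  show "lo \<le> Re (\<phi> (cfun f))" using w2 unfolding \<alpha>_def by (simp add: field_simps)
  show "Re (\<phi> (cfun f)) \<le> hi" using w1 unfolding \<alpha>_def by (simp add: field_simps)
qed

definition hat :: "('x \<Rightarrow> real) \<Rightarrow> (('x \<Rightarrow> complex) \<Rightarrow> complex) \<Rightarrow> real" where
  "hat f \<phi> = Re (\<phi> (cfun f))"

lemma phi_cfun: assumes "\<phi> \<in> \<Delta>" "f \<in> B" shows "\<phi> (cfun f) = complex_of_real (hat f \<phi>)"
proof -
  obtain C where C: "\<And>x. \<bar>f x\<bar> \<le> C" using Bbdd assms by blast
  have "-C \<le> f x \<and> f x \<le> C" for x using C[of x] by (simp add: abs_le_iff)
  then have "Im (\<phi> (cfun f)) = 0" using phi_real_range(1)[OF assms, of "-C" C] by blast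
  then show ?thesis by (simp add: hat_def complex_eq_iff)
qed

lemma hat_nonneg: "\<phi> \<in> \<Delta> \<Longrightarrow> f \<in> B \<Longrightarrow> (\<And>x. 0 \<le> f x) \<Longrightarrow> 0 \<le> hat f \<phi>"
proof -
  assume a: "\<phi> \<in> \<Delta>" "f \<in> B" "\<And>x. 0 \<le> f x"
  obtain C where C: "\<And>x. \<bar>f x\<bar> \<le> C" using Bbdd a by blast
  have "0 \<le> f x \<and> f x \<le> C" for x using C[of x] a(3)[of x] by (simp add: abs_le_iff)
  then show ?thesis using phi_real_range(2)[OF a(1,2), of 0 C] unfolding hat_def by blast
qed

lemma hat_le1: "\<phi> \<in> \<Delta> \<Longrightarrow> f \<in> B \<Longrightarrow> (\<And>x. f x \<le> 1) \<Longrightarrow> hat f \<phi> \<le> 1"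
proof -
  assume a: "\<phi> \<in> \<Delta>" "f \<in> B" "\<And>x. f x \<le> 1"
  obtain C where C: "\<And>x. \<bar>f x\<bar> \<le> C" using Bbdd a by blast
  have "-C \<le> f x \<and> f x \<le> 1" for x using C[of x] a(3)[of x] by (simp add: abs_le_iff)
  then show ?thesis using phi_real_range(3)[OF a(1,2), of "-C" 1] unfolding hat_def by blast
qed

lemma cfun_add: "cfun (\<lambda>x. f x + g x) = (\<lambda>x. cfun f x + cfun g x)" by (simp add: cfun_def fun_eq_iff)
lemma cfun_smult: "cfun (\<lambda>x. c * f x) = (\<lambda>x. complex_of_real c * cfun f x)" by (simp add: cfun_def fun_eq_iff)
lemma cfun_mult: "cfun (\<lambda>x. f x * g x) = (\<lambda>x. cfun f x * cfun g x)" by (simp add: cfun_def fun_eq_iff)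

lemma hat_add: "\<phi> \<in> \<Delta> \<Longrightarrow> f \<in> B \<Longrightarrow> g \<in> B \<Longrightarrow> hat (\<lambda>x. f x + g x) \<phi> = hat f \<phi> + hat g \<phi>"
  unfolding hat_def cfun_add by (simp add: phi_add cfun_A)
lemma hat_smult: "\<phi> \<in> \<Delta> \<Longrightarrow> f \<in> B \<Longrightarrow> hat (\<lambda>x. c * f x) \<phi> = c * hat f \<phi>"
  unfolding hat_def cfun_smult by (simp add: phi_smult cfun_A)
lemma hat_mult: "\<phi> \<in> \<Delta> \<Longrightarrow> f \<in> B \<Longrightarrow> g \<in> B \<Longrightarrow> hat (\<lambda>x. f x * g x) \<phi> = hat f \<phi> * hat g \<phi>"
proof -
  assume a: "\<phi> \<in> \<Delta>" "f \<in> B" "g \<in> B"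
  have "\<phi> (cfun (\<lambda>x. f x * g x)) = \<phi> (cfun f) * \<phi> (cfun g)" unfolding cfun_mult using a by (simp add: phi_mult cfun_A)
  also have "\<dots> = complex_of_real (hat f \<phi> * hat g \<phi>)" using phi_cfun[OF a(1) a(2)] phi_cfun[OF a(1) a(3)] by simp
  finally show ?thesis unfolding hat_def by simp
qed
lemma hat_diff: "\<phi> \<in> \<Delta> \<Longrightarrow> f \<in> B \<Longrightarrow> g \<in> B \<Longrightarrow> hat (\<lambda>x. f x - g x) \<phi> = hat f \<phi> - hat g \<phi>"
proof -
  assume a: "\<phi> \<in> \<Delta>" "f \<in> B" "g \<in> B"
  have "hat (\<lambda>x. f x + (\<lambda>x. (-1) * g x) x) \<phi> = hat f \<phi> + hat (\<lambda>x. (-1) * g x) \<phi>"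
    using a by (intro hat_add Bsmult)
  then show ?thesis using hat_smult[OF a(1) a(3), of "-1"] by simp
qed
lemma hat_zero: "\<phi> \<in> \<Delta> \<Longrightarrow> hat (\<lambda>x. 0) \<phi> = 0"
  using hat_smult[OF _ B0, of \<phi> 0] by simp

lemma hat_sum: assumes phi: "\<phi> \<in> \<Delta>" shows "finite G \<Longrightarrow> (\<And>j. j \<in> G \<Longrightarrow> F j \<in> B) \<Longrightarrow> hat (\<lambda>x. \<Sum>j\<in>G. F j x) \<phi> = (\<Sum>j\<in>G. hat (F j) \<phi>)"
proof (induction G rule: finite_induct)
  case empty then show ?case using hat_zero phi by simp
next
  case (insert a G)
  have "hat (\<lambda>x. F a x + (\<lambda>x. \<Sum>j\<in>G. F j x) x) \<phi> = hat (F a) \<phi> + hat (\<lambda>x. \<Sum>j\<in>G. F j x) \<phi>"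
    using insert phi by (intro hat_add Bsum) auto
  then show ?case using insert by simp
qed

lemma hat_max0: assumes a: "\<phi> \<in> \<Delta>" "f \<in> B" shows "hat (\<lambda>x. max (f x) 0) \<phi> = max (hat f \<phi>) 0"
proof -
  define p where "p = (\<lambda>x. max (f x) 0)"
  define q where "q = (\<lambda>x. max ((\<lambda>x. (-1) * f x) x) 0)"
  have p: "p \<in> B" unfolding p_def using a B0 Bmax[of f "\<lambda>x. 0"] by simp
  have "(\<lambda>x. - f x) \<in> B" using Bsmult[OF a(2), of "-1"] by simp
  then have q: "q \<in> B" unfolding q_def using Bmax[OF _ B0] by simp
  have "(\<lambda>x. p x * q x) = (\<lambda>x. 0)" by (auto simp: p_def q_def fun_eq_iff max_def)
  then have pq: "hat p \<phi> * hat q \<phi> = 0" using hat_mult[OF a(1) p q] hat_zero[OF a(1)] by simp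
  have "(\<lambda>x. p x - q x) = f" by (auto simp: p_def q_def fun_eq_iff max_def)
  then have d: "hat p \<phi> - hat q \<phi> = hat f \<phi>" using hat_diff[OF a(1) p q] by simp
  have "0 \<le> hat p \<phi>" "0 \<le> hat q \<phi>" using hat_nonneg[OF a(1)] p q by (auto simp: p_def q_def)
  then show ?thesis using pq d unfolding p_def[symmetric] by (auto simp: max_def)
qed

lemma hat_max: assumes a: "\<phi> \<in> \<Delta>" "f \<in> B" "g \<in> B" shows "hat (\<lambda>x. max (f x) (g x)) \<phi> = max (hat f \<phi>) (hat g \<phi>)"
proof -
  have d: "(\<lambda>x. f x - g x) \<in> B" using a Bdiff by blast
  have "(\<lambda>x. max (f x) (g x)) = (\<lambda>x. g x + (\<lambda>x. max ((\<lambda>x. f x - g x) x) 0) x)" by (auto simp: fun_eq_iff max_def)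
  moreover have "hat (\<lambda>x. g x + (\<lambda>x. max ((\<lambda>x. f x - g x) x) 0) x) \<phi> = hat g \<phi> + max (hat f \<phi> - hat g \<phi>) 0"
    using hat_add[OF a(1) a(3)] hat_max0[OF a(1) d] hat_diff[OF a] d B0 Bmax by simp
  ultimately show ?thesis by (auto simp: max_def)
qed

lemma hat_abs: assumes a: "\<phi> \<in> \<Delta>" "f \<in> B" shows "hat (\<lambda>x. \<bar>f x\<bar>) \<phi> = \<bar>hat f \<phi>\<bar>"
proof -
  have "(\<lambda>x. \<bar>f x\<bar>) = (\<lambda>x. max (f x) ((\<lambda>x. (-1) * f x) x))" by (auto simp: fun_eq_iff)
  moreover have "hat (\<lambda>x. max (f x) ((\<lambda>x. (-1) * f x) x)) \<phi> = max (hat f \<phi>) (hat (\<lambda>x. (-1) * f x) \<phi>)"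
    using hat_max[OF a Bsmult[OF a(2)]] by blast
  moreover have "hat (\<lambda>x. (-1) * f x) \<phi> = - hat f \<phi>" using hat_smult[OF a, of "-1"] by simp
  ultimately show ?thesis by (simp add: abs_real_def max_def)
qed

lemma hat_min1: assumes a: "\<phi> \<in> \<Delta>" "f \<in> B" shows "hat (\<lambda>x. min (f x) 1) \<phi> = min (hat f \<phi>) 1"
proof -
  define g where "g = (\<lambda>x. min (f x) 1)"
  have g: "g \<in> B" unfolding g_def using Bmin1 a by blast
  have fg: "(\<lambda>x. f x - g x) \<in> B" using a g Bdiff by blast
  have "(\<lambda>x. g x * (\<lambda>x. f x - g x) x) = (\<lambda>x. f x - g x)" by (auto simp: g_def fun_eq_iff min_def)
  then have "hat g \<phi> * (hat f \<phi> - hat g \<phi>) = hat f \<phi> - hat g \<phi>"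
    using hat_mult[OF a(1) g fg] hat_diff[OF a(1) a(2) g] by simp
  moreover have "hat g \<phi> \<le> 1" using hat_le1[OF a(1) g] by (auto simp: g_def)
  moreover have "0 \<le> hat (\<lambda>x. f x - g x) \<phi>" using hat_nonneg[OF a(1) fg] by (auto simp: g_def)
  ultimately have e1: "hat g \<phi> * (hat f \<phi> - hat g \<phi>) = hat f \<phi> - hat g \<phi>" and e2: "hat g \<phi> \<le> 1"
     and e3: "hat g \<phi> \<le> hat f \<phi>" using hat_diff[OF a(1) a(2) g] by auto
  have "(hat g \<phi> - 1) * (hat f \<phi> - hat g \<phi>) = 0" using e1 by (simp add: algebra_simps)
  then have "hat g \<phi> = 1 \<or> hat f \<phi> = hat g \<phi>" by simp
  then have "hat g \<phi> = min (hat f \<phi>) 1" using e2 e3 by (auto simp: min_def)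
  then show ?thesis by (simp add: g_def)
qed

end

context adm begin

abbreviation "T \<equiv> gelfand_top B"

lemma Delta_sub: "\<Delta> \<subseteq> (\<Pi>\<^sub>E a\<in>A. UNIV)"
  using phi_ext by (auto simp: PiE_def)

lemma topspace_T: "topspace T = \<Delta>"
  unfolding gelfand_top_def using Delta_sub by auto

lemma cont_eval: "a \<in> A \<Longrightarrow> continuous_map T euclidean (\<lambda>\<phi>. \<phi> a)"
  unfolding gelfand_top_def
  by (intro continuous_map_from_subtopology continuous_map_product_projection)

lemma cont_hat: assumes "f \<in> B" shows "continuous_map T euclideanreal (hat f)"
proof -
  have "continuous_map T euclideanreal (Re \<circ> (\<lambda>\<phi>. \<phi> (cfun f)))"
    by (intro continuous_map_compose[OF cont_eval]) (auto simp: cfun_A assms continuous_on_Re continuous_on_id)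
  moreover have "hat f = Re \<circ> (\<lambda>\<phi>. \<phi> (cfun f))" by (simp add: fun_eq_iff hat_def)
  ultimately show ?thesis by simp
qed

lemma Hausdorff_T: "Hausdorff_space T"
  unfolding gelfand_top_def
  by (intro Hausdorff_space_subtopology) (simp add: Hausdorff_space_product_topology)

lemma phi_fg: assumes "\<phi> \<in> \<Delta>" "f \<in> B" "g \<in> B"
  shows "\<phi> (\<lambda>x. complex_of_real (f x) + \<i> * complex_of_real (g x)) = complex_of_real (hat f \<phi>) + \<i> * complex_of_real (hat g \<phi>)"
proof -
  have eq: "(\<lambda>x. complex_of_real (f x) + \<i> * complex_of_real (g x)) = (\<lambda>x. cfun f x + (\<lambda>x. \<i> * cfun g x) x)"
    by (simp add: cfun_def)
  have "\<phi> (\<lambda>x. cfun f x + (\<lambda>x. \<i> * cfun g x) x) = \<phi> (cfun f) + \<phi> (\<lambda>x. \<i> * cfun g x)"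
    using phi_add[OF assms(1) cfun_A[OF assms(2)] algA_smult[OF cfun_A[OF assms(3)]]] by blast
  also have "\<dots> = complex_of_real (hat f \<phi>) + \<i> * complex_of_real (hat g \<phi>)"
    using phi_smult[OF assms(1) cfun_A[OF assms(3)]] phi_cfun[OF assms(1,2)] phi_cfun[OF assms(1,3)] by simp
  finally show ?thesis unfolding eq .
qed

lemma cmod_xy: "cmod (complex_of_real x + \<i> * complex_of_real y) \<le> \<bar>x\<bar> + \<bar>y\<bar>"
  using norm_triangle_ineq[of "complex_of_real x" "\<i> * complex_of_real y"] by (simp add: norm_mult)

lemma nbhd: assumes "openin T U" "\<phi>0 \<in> U"
  shows "\<exists>F \<epsilon>. finite F \<and> F \<subseteq> A \<and> \<epsilon> > 0 \<and> (\<forall>\<phi>\<in>\<Delta>. (\<forall>a\<in>F. cmod (\<phi> a - \<phi>0 a) < \<epsilon>) \<longrightarrow> \<phi> \<in> U)"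
proof -
  obtain V where V: "openin (product_topology (\<lambda>_. euclidean) A) V" "U = V \<inter> \<Delta>"
    using assms(1) unfolding gelfand_top_def openin_subtopology by blast
  have "\<phi>0 \<in> V" using V assms by auto
  then obtain W where W: "finite {a \<in> A. W a \<noteq> UNIV}" "\<forall>a\<in>A. open (W a)" "\<phi>0 \<in> Pi\<^sub>E A W" "Pi\<^sub>E A W \<subseteq> V"
    using V(1) unfolding openin_product_topology_alt by auto
  define F where "F = {a \<in> A. W a \<noteq> UNIV}"
  have "\<forall>a\<in>F. \<exists>e>0. ball (\<phi>0 a) e \<subseteq> W a"
    using W(2,3) by (auto simp: F_def PiE_def open_contains_ball)
  then obtain ee where ee: "\<And>a. a \<in> F \<Longrightarrow> ee a > 0 \<and> ball (\<phi>0 a) (ee a) \<subseteq> W a" by metis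
  define \<epsilon> where "\<epsilon> = Min (insert 1 (ee ` F))"
  have fin: "finite F" using W(1) by (simp add: F_def)
  have eps: "\<epsilon> > 0" unfolding \<epsilon>_def using fin ee by (auto simp: Min_gr_iff)
  have epsle: "\<epsilon> \<le> ee a" if "a \<in> F" for a unfolding \<epsilon>_def using fin that by (auto intro: Min_le)
  have "\<phi> \<in> U" if phi: "\<phi> \<in> \<Delta>" and c: "\<forall>a\<in>F. cmod (\<phi> a - \<phi>0 a) < \<epsilon>" for \<phi>
  proof -
    have "\<phi> \<in> Pi\<^sub>E A W"
    proof -
      have "\<phi> a \<in> W a" if a: "a \<in> A" for a
      proof (cases "a \<in> F")
        case True
        then have "dist (\<phi>0 a) (\<phi> a) < ee a" using c epsle[OF True] by (auto simp: dist_norm norm_minus_commute)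
        then show ?thesis using ee[OF True] by auto
      next
        case False then show ?thesis using a by (auto simp: F_def)
      qed
      then show ?thesis using phi_ext[OF phi] by (auto simp: PiE_def)
    qed
    then show ?thesis using W(4) V(2) phi by auto
  qed
  then show ?thesis using fin eps by (intro exI[of _ F] exI[of _ \<epsilon>]) (auto simp: F_def)
qed

lemma nbhdB: assumes "openin T U" "\<phi>0 \<in> U"
  shows "\<exists>G \<eta>. finite G \<and> G \<subseteq> B \<and> \<eta> > 0 \<and> (\<forall>\<phi>\<in>\<Delta>. (\<forall>f\<in>G. \<bar>hat f \<phi> - hat f \<phi>0\<bar> < \<eta>) \<longrightarrow> \<phi> \<in> U)"
proof -
  obtain F \<epsilon> where F: "finite F" "F \<subseteq> A" "\<epsilon> > 0" "\<And>\<phi>. \<phi>\<in>\<Delta> \<Longrightarrow> (\<forall>a\<in>F. cmod (\<phi> a - \<phi>0 a) < \<epsilon>) \<Longrightarrow> \<phi> \<in> U"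
    using nbhd[OF assms] by blast
  have phi0: "\<phi>0 \<in> \<Delta>" using assms openin_subset topspace_T by blast
  have "\<forall>a\<in>F. \<exists>f\<in>B. \<exists>g\<in>B. \<forall>x. cmod (a x - (complex_of_real (f x) + \<i> * complex_of_real (g x))) \<le> \<epsilon>/4"
  proof
    fix a assume "a \<in> F"
    then have "a \<in> A" using F(2) by auto
    moreover have "\<epsilon>/4 > 0" using F(3) by simp
    ultimately show "\<exists>f\<in>B. \<exists>g\<in>B. \<forall>x. cmod (a x - (complex_of_real (f x) + \<i> * complex_of_real (g x))) \<le> \<epsilon>/4"
      unfolding algA_iff by blast
  qed
  then obtain fa ga where fg: "\<And>a. a \<in> F \<Longrightarrow> fa a \<in> B \<and> ga a \<in> B \<and> (\<forall>x. cmod (a x - (complex_of_real (fa a x) + \<i> * complex_of_real (ga a x))) \<le> \<epsilon>/4)"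
    by metis
  define G where "G = fa ` F \<union> ga ` F"
  have "\<phi> \<in> U" if phi: "\<phi> \<in> \<Delta>" and c: "\<forall>f\<in>G. \<bar>hat f \<phi> - hat f \<phi>0\<bar> < \<epsilon>/4" for \<phi>
  proof (rule F(4)[OF phi], intro ballI)
    fix a assume a: "a \<in> F"
    define b where "b = (\<lambda>x. complex_of_real (fa a x) + \<i> * complex_of_real (ga a x))"
    have aA: "a \<in> A" using a F(2) by auto
    have bA: "b \<in> A" unfolding b_def using fg[OF a] algA_fg by blast
    have dA: "(\<lambda>x. a x - b x) \<in> A" using aA bA algA_diff by blast
    have n1: "cmod (\<psi> a - \<psi> b) \<le> \<epsilon>/4" if "\<psi> \<in> \<Delta>" for \<psi>
      using phi_norm[OF that dA, of "\<epsilon>/4"] phi_diff[OF that aA bA] fg[OF a] by (simp add: b_def)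
    have eb: "\<psi> b = complex_of_real (hat (fa a) \<psi>) + \<i> * complex_of_real (hat (ga a) \<psi>)" if "\<psi> \<in> \<Delta>" for \<psi>
      unfolding b_def using phi_fg[OF that] fg[OF a] by blast
    have "cmod (\<phi> b - \<phi>0 b) \<le> \<bar>hat (fa a) \<phi> - hat (fa a) \<phi>0\<bar> + \<bar>hat (ga a) \<phi> - hat (ga a) \<phi>0\<bar>"
    proof -
      have "\<phi> b - \<phi>0 b = complex_of_real (hat (fa a) \<phi> - hat (fa a) \<phi>0) + \<i> * complex_of_real (hat (ga a) \<phi> - hat (ga a) \<phi>0)"
        using eb[OF phi] eb[OF phi0] by (simp add: algebra_simps)
      then show ?thesis using cmod_xy[of "hat (fa a) \<phi> - hat (fa a) \<phi>0" "hat (ga a) \<phi> - hat (ga a) \<phi>0"] by (simp only:)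
    qed
    moreover have "\<bar>hat (fa a) \<phi> - hat (fa a) \<phi>0\<bar> < \<epsilon>/4" "\<bar>hat (ga a) \<phi> - hat (ga a) \<phi>0\<bar> < \<epsilon>/4"
      using c a by (auto simp: G_def)
    moreover have "cmod (\<phi> a - \<phi>0 a) \<le> cmod (\<phi> a - \<phi> b) + cmod (\<phi> b - \<phi>0 b) + cmod (\<phi>0 b - \<phi>0 a)"
    proof -
      have "\<phi> a - \<phi>0 a = (\<phi> a - \<phi> b) + ((\<phi> b - \<phi>0 b) + (\<phi>0 b - \<phi>0 a))" by simp
      then have "cmod (\<phi> a - \<phi>0 a) \<le> cmod (\<phi> a - \<phi> b) + cmod ((\<phi> b - \<phi>0 b) + (\<phi>0 b - \<phi>0 a))"
        by (metis norm_triangle_ineq)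
      also have "\<dots> \<le> cmod (\<phi> a - \<phi> b) + (cmod (\<phi> b - \<phi>0 b) + cmod (\<phi>0 b - \<phi>0 a))"
        using norm_triangle_ineq by (intro add_left_mono) blast
      finally show ?thesis by simp
    qed
    moreover have "cmod (\<phi>0 b - \<phi>0 a) \<le> \<epsilon>/4" using n1[OF phi0] by (simp add: norm_minus_commute)
    ultimately show "cmod (\<phi> a - \<phi>0 a) < \<epsilon>" using n1[OF phi] by linarith
  qed
  moreover have "finite G" "G \<subseteq> B" using F(1) fg by (auto simp: G_def)
  ultimately show ?thesis using F(3) by (intro exI[of _ G] exI[of _ "\<epsilon>/4"]) auto
qed

lemma exists_f0: assumes phi: "\<phi> \<in> \<Delta>" shows "\<exists>f\<in>B. hat f \<phi> \<noteq> 0"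
proof (rule ccontr)
  assume H: "\<not> (\<exists>f\<in>B. hat f \<phi> \<noteq> 0)"
  obtain a where a: "a \<in> A" "\<phi> a \<noteq> 0" using phi_nz[OF phi] by blast
  have "cmod (\<phi> a) \<le> e" if e: "e > 0" for e
  proof -
    obtain f g where fg: "f \<in> B" "g \<in> B" "\<And>x. cmod (a x - (complex_of_real (f x) + \<i> * complex_of_real (g x))) \<le> e"
      using a(1) e unfolding algA_iff by meson
    define b where "b = (\<lambda>x. complex_of_real (f x) + \<i> * complex_of_real (g x))"
    have bA: "b \<in> A" unfolding b_def using fg algA_fg by blast
    have "\<phi> b = 0" unfolding b_def using phi_fg[OF phi fg(1,2)] H fg by auto
    moreover have "cmod (\<phi> a - \<phi> b) \<le> e"
      using phi_norm[OF phi algA_diff[OF a(1) bA], of e] phi_diff[OF phi a(1) bA] fg by (simp add: b_def)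
    ultimately show ?thesis by simp
  qed
  then have "cmod (\<phi> a) \<le> 0" by (meson dense not_le)
  then show False using a by simp
qed

end


lemma ineq_bump: fixes \<sigma> d e K :: real
  assumes "0 \<le> \<sigma>" "\<sigma> \<le> 1" "0 \<le> d" "0 \<le> e" "0 < K" "0 < \<sigma> - K*(\<sigma> - \<sigma>*\<sigma>) - K*d - K*e"
  shows "K*d < 1" "K*e < 1" "K*(1-\<sigma>) < 1"
proof -
  have p: "0 \<le> K*(\<sigma> - \<sigma>*\<sigma>)" using assms by (intro mult_nonneg_nonneg) (auto simp: mult_left_le)
  have q: "0 \<le> K*d" "0 \<le> K*e" using assms by auto
  show "K*d < 1" "K*e < 1" using p q assms by linarith+
  have "\<sigma> * (1 - K*(1-\<sigma>)) > 0" using assms(6) q by (simp add: algebra_simps)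
  then have "1 - K*(1-\<sigma>) > 0" using assms(1) by (simp add: zero_less_mult_iff)
  then show "K*(1-\<sigma>) < 1" by simp
qed

lemma fin_ineq: fixes K a b rr R \<eta> z :: real
  assumes "0 < K" "K*a < 1" "K*b < 2" "0 \<le> rr" "rr \<le> R" "0 < \<eta>" "(1 + 2*R)/\<eta> < K" "\<bar>z\<bar> \<le> a + rr*b" "0 \<le> b"
  shows "\<bar>z\<bar> < \<eta>"
proof -
  have "K * \<bar>z\<bar> \<le> K*(a + rr*b)" using assms(1,8) by (intro mult_left_mono) auto
  also have "\<dots> = K*a + rr*(K*b)" by (simp add: algebra_simps)
  also have "rr*(K*b) \<le> rr * 2" using assms(3,4) by (intro mult_left_mono) auto
  also have "rr * 2 \<le> 2 * R" using assms(5) by simp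
  finally have "K * \<bar>z\<bar> < 1 + 2*R" using assms(2) by linarith
  also have "1 + 2*R < K * \<eta>" using assms(6,7) by (simp add: divide_less_eq mult.commute)
  finally show ?thesis using assms(1) by simp
qed

context adm begin

lemmas Bclos = B0 Badd Bdiff Bsmult Bmult Bmax Bmin1 Babs Bsum

lemma bump:
  assumes phi0: "\<phi>0 \<in> \<Delta>" and G: "finite G" "G \<subseteq> B" and eta: "\<eta> > 0"
  shows "\<exists>h\<in>B. (\<forall>\<phi>\<in>\<Delta>. 0 \<le> hat h \<phi>) \<and> hat h \<phi>0 > 0 \<and>
           (\<forall>\<phi>\<in>\<Delta>. hat h \<phi> > 0 \<longrightarrow> (\<forall>j\<in>G. \<bar>hat j \<phi> - hat j \<phi>0\<bar> < \<eta>))"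
proof -
  obtain f0 where f0: "f0 \<in> B" "hat f0 \<phi>0 \<noteq> 0" using exists_f0[OF phi0] by blast
  define c where "c = 1 / hat f0 \<phi>0"
  define f1 where "f1 = (\<lambda>x. c * f0 x)"
  have f1: "f1 \<in> B" unfolding f1_def using f0 Bsmult by blast
  have hf1: "hat f1 \<phi> = c * hat f0 \<phi>" if "\<phi> \<in> \<Delta>" for \<phi> unfolding f1_def using hat_smult[OF that f0(1)] .
  have hf10: "hat f1 \<phi>0 = 1" using hf1[OF phi0] f0(2) by (simp add: c_def)
  define s where "s = (\<lambda>x. min ((\<lambda>x. max (f1 x) ((\<lambda>x. 0) x)) x) 1)"
  have s: "s \<in> B" unfolding s_def using f1 B0 Bmax Bmin1 by blast
  have hs: "hat s \<phi> = min (max (hat f1 \<phi>) 0) 1" if "\<phi> \<in> \<Delta>" for \<phi>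
    unfolding s_def using hat_min1[OF that Bmax[OF f1 B0]] hat_max[OF that f1 B0] hat_zero[OF that] by simp
  define r where "r j = hat j \<phi>0" for j
  define Fj where "Fj j = (\<lambda>x. \<bar>j x - r j * f1 x\<bar>)" for j
  have Fj: "Fj j \<in> B" if "j \<in> B" for j unfolding Fj_def using that f1 by (intro Babs Bdiff Bsmult)
  have hFj: "hat (Fj j) \<phi> = \<bar>hat j \<phi> - r j * hat f1 \<phi>\<bar>" if "\<phi> \<in> \<Delta>" "j \<in> B" for j \<phi>
    unfolding Fj_def using hat_abs[OF that(1) Bdiff[OF that(2) Bsmult[OF f1]]] hat_diff[OF that(1) that(2) Bsmult[OF f1]]
      hat_smult[OF that(1) f1] by simp
  define D where "D = (\<lambda>x. \<Sum>j\<in>G. Fj j x)"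
  have D: "D \<in> B" unfolding D_def using G Fj by (intro Bsum) auto
  have hD: "hat D \<phi> = (\<Sum>j\<in>G. \<bar>hat j \<phi> - r j * hat f1 \<phi>\<bar>)" if "\<phi> \<in> \<Delta>" for \<phi>
  proof -
    have 1: "\<And>j. j\<in>G \<Longrightarrow> Fj j \<in> B" using G(2) Fj by auto
    have "hat D \<phi> = (\<Sum>j\<in>G. hat (Fj j) \<phi>)" unfolding D_def by (rule hat_sum[OF that G(1) 1])
    also have "\<dots> = (\<Sum>j\<in>G. \<bar>hat j \<phi> - r j * hat f1 \<phi>\<bar>)" using hFj[OF that] G(2) by (intro sum.cong) auto
    finally show ?thesis .
  qed
  define E where "E = (\<lambda>x. \<bar>f1 x - s x\<bar>)"
  have E: "E \<in> B" unfolding E_def using f1 s by (intro Babs Bdiff)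
  have hE: "hat E \<phi> = \<bar>hat f1 \<phi> - hat s \<phi>\<bar>" if "\<phi> \<in> \<Delta>" for \<phi>
    unfolding E_def using hat_abs[OF that Bdiff[OF f1 s]] hat_diff[OF that f1 s] by simp
  define R where "R = (\<Sum>j\<in>G. \<bar>r j\<bar>)"
  have R0: "0 \<le> R" unfolding R_def by (simp add: sum_nonneg)
  define K where "K = (1 + 2*R)/\<eta> + 1"
  have K0: "K > 0" unfolding K_def using R0 eta by (simp add: add_pos_nonneg)
  have KK: "(1 + 2*R)/\<eta> < K" unfolding K_def by simp
  define inner where "inner = (\<lambda>x. s x - K * (s x - s x * s x) - K * D x - K * E x)"
  have inner: "inner \<in> B" unfolding inner_def using s D E by (intro Bdiff Bsmult Bmult)
  have hinner: "hat inner \<phi> = hat s \<phi> - K * (hat s \<phi> - hat s \<phi> * hat s \<phi>) - K * hat D \<phi> - K * hat E \<phi>"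
    if phi: "\<phi> \<in> \<Delta>" for \<phi>
  proof -
    have 1: "(\<lambda>x. s x * s x) \<in> B" using s Bmult by blast
    have 2: "(\<lambda>x. s x - s x * s x) \<in> B" using s 1 Bdiff by blast
    have 3: "(\<lambda>x. K * (s x - s x * s x)) \<in> B" using 2 Bsmult by blast
    have 4: "(\<lambda>x. s x - K * (s x - s x * s x)) \<in> B" using s 3 Bdiff by blast
    have 5: "(\<lambda>x. K * D x) \<in> B" using D Bsmult by blast
    have 6: "(\<lambda>x. s x - K * (s x - s x * s x) - K * D x) \<in> B" using 4 5 Bdiff by blast
    have 7: "(\<lambda>x. K * E x) \<in> B" using E Bsmult by blast
    have "hat inner \<phi> = hat (\<lambda>x. s x - K * (s x - s x * s x) - K * D x) \<phi> - hat (\<lambda>x. K * E x) \<phi>"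
      unfolding inner_def using hat_diff[OF phi 6 7] by simp
    also have "\<dots> = hat (\<lambda>x. s x - K * (s x - s x * s x)) \<phi> - hat (\<lambda>x. K * D x) \<phi> - K * hat E \<phi>"
      using hat_diff[OF phi 4 5] hat_smult[OF phi E] by simp
    also have "\<dots> = hat s \<phi> - hat (\<lambda>x. K * (s x - s x * s x)) \<phi> - K * hat D \<phi> - K * hat E \<phi>"
      using hat_diff[OF phi s 3] hat_smult[OF phi D] by simp
    also have "\<dots> = hat s \<phi> - K * (hat s \<phi> - hat s \<phi> * hat s \<phi>) - K * hat D \<phi> - K * hat E \<phi>"
      using hat_smult[OF phi 2] hat_diff[OF phi s 1] hat_mult[OF phi s s] by simp
    finally show ?thesis .
  qed
  define h where "h = (\<lambda>x. max (inner x) ((\<lambda>x. 0) x))"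
  have h: "h \<in> B" unfolding h_def using inner B0 Bmax by blast
  have hh: "hat h \<phi> = max (hat inner \<phi>) 0" if "\<phi> \<in> \<Delta>" for \<phi>
    unfolding h_def using hat_max[OF that inner B0] hat_zero[OF that] by simp
  have "hat s \<phi>0 = 1" using hs[OF phi0] hf10 by simp
  moreover have "hat E \<phi>0 = 0" using hE[OF phi0] hf10 \<open>hat s \<phi>0 = 1\<close> by simp
  moreover have "hat D \<phi>0 = 0" using hD[OF phi0] hf10 by (simp add: r_def)
  ultimately have "hat h \<phi>0 = 1" using hh[OF phi0] hinner[OF phi0] by simp
  moreover have "\<forall>\<phi>\<in>\<Delta>. 0 \<le> hat h \<phi>" using hh by simp
  moreover have "\<forall>j\<in>G. \<bar>hat j \<phi> - hat j \<phi>0\<bar> < \<eta>" if phi: "\<phi> \<in> \<Delta>" and pos: "hat h \<phi> > 0" for \<phi>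
  proof
    fix j assume j: "j \<in> G"
    define \<sigma> where "\<sigma> = hat s \<phi>"
    have s01: "0 \<le> \<sigma>" "\<sigma> \<le> 1" using hs[OF phi] by (auto simp: \<sigma>_def)
    have d0: "0 \<le> hat D \<phi>" using hD[OF phi] by (simp add: sum_nonneg)
    have e0: "0 \<le> hat E \<phi>" using hE[OF phi] by simp
    have ip: "0 < \<sigma> - K*(\<sigma> - \<sigma>*\<sigma>) - K*hat D \<phi> - K*hat E \<phi>"
      using pos hh[OF phi] hinner[OF phi] by (simp add: \<sigma>_def)
    note ib = ineq_bump[OF s01 d0 e0 K0 ip]
    have "\<bar>hat j \<phi> - r j * hat f1 \<phi>\<bar> \<le> hat D \<phi>"
      unfolding hD[OF phi] using G(1) j by (intro member_le_sum) auto
    then have "K * \<bar>hat j \<phi> - r j * hat f1 \<phi>\<bar> \<le> K * hat D \<phi>" using K0 by (intro mult_left_mono) auto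
    then have a1: "K * \<bar>hat j \<phi> - r j * hat f1 \<phi>\<bar> < 1" using ib(1) by linarith
    have b0: "\<bar>hat f1 \<phi> - 1\<bar> \<le> hat E \<phi> + (1 - \<sigma>)" using hE[OF phi] s01 by (simp add: \<sigma>_def)
    have b1: "K * \<bar>hat f1 \<phi> - 1\<bar> < 2"
    proof -
      have "K * \<bar>hat f1 \<phi> - 1\<bar> \<le> K * (hat E \<phi> + (1 - \<sigma>))" using b0 K0 by (intro mult_left_mono) auto
      also have "\<dots> = K * hat E \<phi> + K * (1 - \<sigma>)" by (simp add: algebra_simps)
      finally show ?thesis using ib(2,3) by linarith
    qed
    have rr: "\<bar>r j\<bar> \<le> R" unfolding R_def using G(1) j by (intro member_le_sum) auto
    have z: "\<bar>hat j \<phi> - r j\<bar> \<le> \<bar>hat j \<phi> - r j * hat f1 \<phi>\<bar> + \<bar>r j\<bar> * \<bar>hat f1 \<phi> - 1\<bar>"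
    proof -
      have "hat j \<phi> - r j = (hat j \<phi> - r j * hat f1 \<phi>) + r j * (hat f1 \<phi> - 1)" by (simp add: algebra_simps)
      then show ?thesis by (metis abs_mult abs_triangle_ineq)
    qed
    have "\<bar>hat j \<phi> - r j\<bar> < \<eta>"
      by (rule fin_ineq[OF K0 a1 b1 abs_ge_zero rr eta KK z abs_ge_zero])
    then show "\<bar>hat j \<phi> - hat j \<phi>0\<bar> < \<eta>" by (simp add: r_def)
  qed
  ultimately show ?thesis using h by (intro bexI[of _ h]) auto
qed

end

context adm begin

lemma openin_pos: "f \<in> B \<Longrightarrow> openin T {\<phi> \<in> \<Delta>. 0 < hat f \<phi>}"
proof -
  assume f: "f \<in> B"
  have "openin T {\<phi> \<in> topspace T. hat f \<phi> \<in> {0<..}}"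
    by (rule openin_continuous_map_preimage[OF cont_hat[OF f]]) auto
  then show ?thesis by (simp add: topspace_T)
qed

lemma urysohn:
  assumes K: "compactin T K" and U: "openin T U" and KU: "K \<subseteq> U"
  shows "\<exists>h\<in>B. (\<forall>\<phi>\<in>\<Delta>. 0 \<le> hat h \<phi> \<and> hat h \<phi> \<le> 1) \<and> (\<forall>\<phi>\<in>K. hat h \<phi> = 1) \<and> (\<forall>\<phi>\<in>\<Delta>. \<phi> \<notin> U \<longrightarrow> hat h \<phi> = 0)"
proof -
  have KD: "K \<subseteq> \<Delta>" using K unfolding compactin_def topspace_T by blast
  define Hs where "Hs = {h\<in>B. (\<forall>\<phi>\<in>\<Delta>. 0 \<le> hat h \<phi>) \<and> (\<forall>\<phi>\<in>\<Delta>. hat h \<phi> > 0 \<longrightarrow> \<phi> \<in> U)}"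
  define Op where "Op h = {\<phi> \<in> \<Delta>. 0 < hat h \<phi>}" for h
  have loc: "\<exists>h\<in>Hs. \<phi>0 \<in> Op h" if p0: "\<phi>0 \<in> K" for \<phi>0
  proof -
    have "\<phi>0 \<in> U" using p0 KU by auto
    from nbhdB[OF U this] obtain G \<eta> where G: "finite G" "G \<subseteq> B" "\<eta> > 0" "\<forall>\<phi>\<in>\<Delta>. (\<forall>f\<in>G. \<bar>hat f \<phi> - hat f \<phi>0\<bar> < \<eta>) \<longrightarrow> \<phi> \<in> U"
      by blast
    have "\<phi>0 \<in> \<Delta>" using p0 KD by auto
    then obtain h where h: "h \<in> B" "\<forall>\<phi>\<in>\<Delta>. 0 \<le> hat h \<phi>" "hat h \<phi>0 > 0"
      "\<forall>\<phi>\<in>\<Delta>. hat h \<phi> > 0 \<longrightarrow> (\<forall>j\<in>G. \<bar>hat j \<phi> - hat j \<phi>0\<bar> < \<eta>)"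
      using bump[OF _ G(1,2,3)] by blast
    have "h \<in> Hs" unfolding Hs_def using h G(4) by auto
    moreover have "\<phi>0 \<in> Op h" unfolding Op_def using h \<open>\<phi>0 \<in> \<Delta>\<close> by auto
    ultimately show ?thesis by blast
  qed
  have "\<exists>\<F>. finite \<F> \<and> \<F> \<subseteq> Op ` Hs \<and> K \<subseteq> \<Union>\<F>"
  proof -
    have "\<forall>V\<in>Op ` Hs. openin T V" unfolding Op_def Hs_def using openin_pos by auto
    moreover have "K \<subseteq> \<Union>(Op ` Hs)" using loc by blast
    ultimately show ?thesis using K unfolding compactin_def by blast
  qed
  then obtain \<F> where F: "finite \<F>" "\<F> \<subseteq> Op ` Hs" "K \<subseteq> \<Union>\<F>" by blast
  then obtain H0 where H0: "H0 \<subseteq> Hs" "finite H0" "\<F> = Op ` H0" using finite_subset_image by metis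
  have H0B: "\<And>h. h \<in> H0 \<Longrightarrow> h \<in> B" using H0 unfolding Hs_def by auto
  define h0 where "h0 = (\<lambda>x. \<Sum>h\<in>H0. h x)"
  have h0: "h0 \<in> B" unfolding h0_def using H0 H0B by (intro Bsum) auto
  have hh0: "hat h0 \<phi> = (\<Sum>h\<in>H0. hat h \<phi>)" if "\<phi> \<in> \<Delta>" for \<phi>
    unfolding h0_def by (rule hat_sum[OF that H0(2) H0B])
  have nn: "0 \<le> hat h \<phi>" if "h \<in> H0" "\<phi> \<in> \<Delta>" for h \<phi> using that H0(1) unfolding Hs_def by auto
  have h0nn: "0 \<le> hat h0 \<phi>" if "\<phi> \<in> \<Delta>" for \<phi> using hh0[OF that] nn[OF _ that] by (simp add: sum_nonneg)
  have h0pos: "0 < hat h0 \<phi>" if pK: "\<phi> \<in> K" for \<phi>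
  proof -
    have p: "\<phi> \<in> \<Delta>" using pK KD by auto
    obtain h where "h \<in> H0" "\<phi> \<in> Op h" using pK F(3) H0(3) by blast
    then have "0 < hat h \<phi>" "h \<in> H0" unfolding Op_def by auto
    moreover have "hat h \<phi> \<le> (\<Sum>h\<in>H0. hat h \<phi>)" using calculation(2) H0(2) nn[OF _ p] by (intro member_le_sum) auto
    ultimately show ?thesis using hh0[OF p] by simp
  qed
  have h0U: "\<phi> \<in> U" if "\<phi> \<in> \<Delta>" "0 < hat h0 \<phi>" for \<phi>
  proof -
    have "0 < (\<Sum>h\<in>H0. hat h \<phi>)" using that hh0 by simp
    then obtain h where "h \<in> H0" "0 < hat h \<phi>" by (meson not_le sum_nonpos)
    then show ?thesis using that(1) H0(1) unfolding Hs_def by auto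
  qed
  show ?thesis
  proof (cases "K = {}")
    case True
    then show ?thesis using B0 hat_zero by (intro bexI[of _ "\<lambda>x. 0"]) auto
  next
    case False
    have "compactin euclideanreal (hat h0 ` K)" by (rule image_compactin[OF K cont_hat[OF h0]])
    then have "compact (hat h0 ` K)" by simp
    then obtain m where m: "m \<in> hat h0 ` K" "\<And>t. t \<in> hat h0 ` K \<Longrightarrow> m \<le> t"
      using compact_attains_inf False by (metis image_is_empty)
    have m0: "m > 0" using m(1) h0pos by auto
    define h where "h = (\<lambda>x. min ((\<lambda>x. (1/m) * h0 x) x) 1)"
    have h: "h \<in> B" unfolding h_def using h0 by (intro Bmin1 Bsmult)
    have hh: "hat h \<phi> = min ((1/m) * hat h0 \<phi>) 1" if "\<phi> \<in> \<Delta>" for \<phi>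
      unfolding h_def using hat_min1[OF that Bsmult[OF h0, of "1/m"]] hat_smult[OF that h0, of "1/m"] by simp
    have "\<forall>\<phi>\<in>\<Delta>. 0 \<le> hat h \<phi> \<and> hat h \<phi> \<le> 1" using hh h0nn m0 by auto
    moreover have "\<forall>\<phi>\<in>K. hat h \<phi> = 1"
    proof
      fix \<phi> assume p: "\<phi> \<in> K"
      then have "m \<le> hat h0 \<phi>" using m(2) by auto
      then have "1 \<le> (1/m) * hat h0 \<phi>" using m0 by (simp add: field_simps)
      then show "hat h \<phi> = 1" using hh p KD by auto
    qed
    moreover have "\<forall>\<phi>\<in>\<Delta>. \<phi> \<notin> U \<longrightarrow> hat h \<phi> = 0"
    proof (intro ballI impI)
      fix \<phi> assume p: "\<phi> \<in> \<Delta>" "\<phi> \<notin> U"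
      have "\<not> 0 < hat h0 \<phi>" using h0U p by blast
      then have "hat h0 \<phi> = 0" using h0nn[OF p(1)] by linarith
      then show "hat h \<phi> = 0" using hh[OF p(1)] by simp
    qed
    ultimately show ?thesis using h by blast
  qed
qed

end


lemma cmap_mult: fixes f g :: "'a \<Rightarrow> complex"
  shows "continuous_map X euclidean f \<Longrightarrow> continuous_map X euclidean g \<Longrightarrow> continuous_map X euclidean (\<lambda>x. f x * g x)"
  by (simp add: continuous_map_atin tendsto_mult)

context adm begin

lemma supnorm_ge: assumes "a \<in> A" shows "cmod (a x) \<le> supnorm a"
proof -
  obtain M where M: "\<And>x. cmod (a x) \<le> M" using algA_bdd[OF assms] by blast
  have bdd: "bdd_above (range (\<lambda>x. cmod (a x)))" using M by (intro bdd_aboveI[where M=M]) auto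
  show ?thesis unfolding supnorm_def by (rule cSUP_upper[OF UNIV_I bdd])
qed

lemma phi_le_supnorm: "\<phi> \<in> \<Delta> \<Longrightarrow> a \<in> A \<Longrightarrow> cmod (\<phi> a) \<le> supnorm a"
  using phi_norm supnorm_ge by blast

abbreviation "P \<equiv> product_topology (\<lambda>_. euclidean) A :: (('x \<Rightarrow> complex) \<Rightarrow> complex) topology"

lemma cont_projP: "a \<in> A \<Longrightarrow> continuous_map P euclidean (\<lambda>\<phi>. \<phi> a)"
  by (rule continuous_map_product_projection)

lemma compact_level:
  assumes w: "w \<in> B" and t: "t > 0"
  shows "compactin T {\<phi>\<in>\<Delta>. t \<le> hat w \<phi>}"
proof -
  define C where "C = {\<phi>\<in>\<Delta>. t \<le> hat w \<phi>}"
  define St where "St = {\<phi>\<in>topspace P. \<phi> (cfun w) \<in> {z. t \<le> Re z}}"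
  define Sa where "Sa p = {\<phi>\<in>topspace P. \<phi> (\<lambda>x. fst p x + snd p x) = \<phi> (fst p) + \<phi> (snd p)}" for p
  define Ss where "Ss p = {\<phi>\<in>topspace P. \<phi> (\<lambda>x. snd p * fst p x) = snd p * \<phi> (fst p)}" for p
  define Sm where "Sm p = {\<phi>\<in>topspace P. \<phi> (\<lambda>x. fst p x * snd p x) = \<phi> (fst p) * \<phi> (snd p)}" for p
  define Sb where "Sb a = {\<phi>\<in>topspace P. \<phi> a \<in> cball 0 (supnorm a)}" for a
  define C' where "C' = St \<inter> (\<Inter>p\<in>A\<times>A. Sa p) \<inter> (\<Inter>p\<in>A\<times>UNIV. Ss p) \<inter> (\<Inter>p\<in>A\<times>A. Sm p) \<inter> (\<Inter>a\<in>A. Sb a)"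
  have Ane: "A \<noteq> {}" using algA_ne by blast
  have cw: "cfun w \<in> A" using cfun_A w by blast
  have clSt: "closedin P St" unfolding St_def
    by (rule closedin_continuous_map_preimage[OF cont_projP[OF cw]]) (simp add: closed_halfspace_Re_ge flip: closed_closedin)
  have clSa: "closedin P (Sa p)" if "p \<in> A\<times>A" for p
  proof -
    have a: "fst p \<in> A" and b: "snd p \<in> A" using that by auto
    show ?thesis unfolding Sa_def
      by (rule closedin_continuous_maps_eq[OF Hausdorff_space_euclidean cont_projP[OF algA_add[OF a b]]
          continuous_map_add[OF cont_projP[OF a] cont_projP[OF b]]])
  qed
  have clSs: "closedin P (Ss p)" if "p \<in> A\<times>UNIV" for p
  proof -
    have a: "fst p \<in> A" using that by auto
    show ?thesis unfolding Ss_def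
      by (rule closedin_continuous_maps_eq[OF Hausdorff_space_euclidean cont_projP[OF algA_smult[OF a]]
          cmap_mult[OF continuous_map_canonical_const cont_projP[OF a]]])
  qed
  have clSm: "closedin P (Sm p)" if "p \<in> A\<times>A" for p
  proof -
    have a: "fst p \<in> A" and b: "snd p \<in> A" using that by auto
    show ?thesis unfolding Sm_def
      by (rule closedin_continuous_maps_eq[OF Hausdorff_space_euclidean cont_projP[OF algA_mult[OF a b]]
          cmap_mult[OF cont_projP[OF a] cont_projP[OF b]]])
  qed
  have clSb: "closedin P (Sb a)" if "a \<in> A" for a
    unfolding Sb_def
    by (rule closedin_continuous_map_preimage[OF cont_projP[OF that]]) (simp flip: closed_closedin)
  have clC': "closedin P C'" unfolding C'_def
    using Ane clSt clSa clSs clSm clSb by (intro closedin_Int closedin_Inter) auto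
  have CC': "C = C'"
  proof
    show "C \<subseteq> C'"
    proof
      fix \<phi> assume "\<phi> \<in> C"
      then have p: "\<phi> \<in> \<Delta>" and tw: "t \<le> hat w \<phi>" by (auto simp: C_def)
      have top: "\<phi> \<in> topspace P" using p Delta_sub by auto
      show "\<phi> \<in> C'" unfolding C'_def St_def Sa_def Ss_def Sm_def Sb_def
        using top tw p phi_add[OF p] phi_smult[OF p] phi_mult[OF p] phi_le_supnorm[OF p]
        by (auto simp: hat_def)
    qed
    show "C' \<subseteq> C"
    proof
      fix \<phi> assume "\<phi> \<in> C'"
      then have top: "\<phi> \<in> topspace P" and tw: "t \<le> Re (\<phi> (cfun w))"
        and add: "\<And>a b. a \<in> A \<Longrightarrow> b \<in> A \<Longrightarrow> \<phi> (\<lambda>x. a x + b x) = \<phi> a + \<phi> b"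
        and sm: "\<And>a c. a \<in> A \<Longrightarrow> \<phi> (\<lambda>x. c * a x) = c * \<phi> a"
        and mul: "\<And>a b. a \<in> A \<Longrightarrow> b \<in> A \<Longrightarrow> \<phi> (\<lambda>x. a x * b x) = \<phi> a * \<phi> b"
        and bd: "\<And>a. a \<in> A \<Longrightarrow> cmod (\<phi> a) \<le> supnorm a"
        unfolding C'_def St_def Sa_def Ss_def Sm_def Sb_def by (auto simp: dist_norm)
      have ext: "\<phi> \<in> extensional A" using top by (simp add: PiE_def)
      have nz: "\<phi> (cfun w) \<noteq> 0" using tw t by auto
      have "\<phi> \<in> \<Delta>" unfolding spectrum_of_def
        using ext add sm mul bd nz cw by (auto intro!: exI[of _ 1])
      then show "\<phi> \<in> C" using tw by (simp add: C_def hat_def)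
    qed
  qed
  define Pc where "Pc = Pi\<^sub>E A (\<lambda>a. cball (0::complex) (supnorm a))"
  have cPc: "compactin P Pc" unfolding Pc_def by (simp add: compactin_PiE)
  have "C \<subseteq> Pc"
  proof
    fix \<phi> assume "\<phi> \<in> C"
    then have p: "\<phi> \<in> \<Delta>" by (auto simp: C_def)
    then show "\<phi> \<in> Pc" unfolding Pc_def using phi_ext[OF p] phi_le_supnorm[OF p] by (auto simp: PiE_def dist_norm)
  qed
  then have "compactin P C" using closed_compactin[OF cPc] clC' CC' by blast
  moreover have "C \<subseteq> \<Delta>" by (auto simp: C_def)
  ultimately show ?thesis unfolding gelfand_top_def C_def compactin_subtopology by blast
qed

lemma compact_support:
  assumes w: "w \<in> B" and t: "t > 0" and g: "g \<in> B" and sup: "\<And>\<phi>. \<phi> \<in> \<Delta> \<Longrightarrow> hat g \<phi> \<noteq> 0 \<Longrightarrow> t \<le> hat w \<phi>"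
  shows "compactin T (T closure_of {\<phi>\<in>\<Delta>. \<phi> (cfun g) \<noteq> 0})"
proof -
  define C where "C = {\<phi>\<in>\<Delta>. t \<le> hat w \<phi>}"
  have cC: "compactin T C" unfolding C_def by (rule compact_level[OF w t])
  have clC: "closedin T C" by (rule compactin_imp_closedin[OF Hausdorff_T cC])
  have "{\<phi>\<in>\<Delta>. \<phi> (cfun g) \<noteq> 0} \<subseteq> C"
  proof
    fix \<phi> assume "\<phi> \<in> {\<phi>\<in>\<Delta>. \<phi> (cfun g) \<noteq> 0}"
    then have p: "\<phi> \<in> \<Delta>" and nz: "\<phi> (cfun g) \<noteq> 0" by auto
    have "hat g \<phi> \<noteq> 0" using nz phi_cfun[OF p g] by auto
    then show "\<phi> \<in> C" unfolding C_def using sup[OF p] p by auto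
  qed
  then have "T closure_of {\<phi>\<in>\<Delta>. \<phi> (cfun g) \<noteq> 0} \<subseteq> C" by (rule closure_of_minimal[OF _ clC])
  then show ?thesis using closed_compactin[OF cC] closedin_closure_of by blast
qed

end


lemma lim1: "(\<lambda>n. 1 / (real n + 1)) \<longlonglongrightarrow> 0"
proof -
  have "(\<lambda>n. inverse (real (Suc n))) \<longlonglongrightarrow> 0" by (rule LIMSEQ_inverse_real_of_nat)
  then show ?thesis by (simp add: inverse_eq_divide add.commute)
qed

locale meas = adm B for B :: "('x \<Rightarrow> real) set" +
  fixes mu :: "'x set \<Rightarrow> ennreal" and \<nu> :: "(('x \<Rightarrow> complex) \<Rightarrow> complex) measure"
  assumes inD: "in_D B mu" and hatm: "is_hat_measure B mu \<nu>"
begin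

lemma radon: "radon_on T \<nu>" using hatm unfolding is_hat_measure_def by blast

lemma space_nu: "space \<nu> = \<Delta>" using radon topspace_T unfolding radon_on_def by simp

lemma sets_nu: "sets \<nu> = sigma_sets \<Delta> {U. openin T U}"
proof -
  have "sets \<nu> = sets (borel_of T)" using radon unfolding radon_on_def by blast
  also have "\<dots> = sigma_sets (topspace T) {U. openin T U}" unfolding borel_of_def
    by (rule sets_measure_of) (auto dest: openin_subset)
  finally show ?thesis by (simp add: topspace_T)
qed

lemma open_sets: "openin T U \<Longrightarrow> U \<in> sets \<nu>" unfolding sets_nu by auto

lemma closed_sets: assumes "closedin T K" shows "K \<in> sets \<nu>"
proof -
  have o: "openin T (\<Delta> - K)" using assms openin_diff[OF openin_topspace assms] by (simp add: topspace_T)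
  then have "\<Delta> - K \<in> sigma_sets \<Delta> {U. openin T U}" by auto
  then have "\<Delta> - (\<Delta> - K) \<in> sigma_sets \<Delta> {U. openin T U}" by (rule sigma_sets.Compl)
  then have "\<Delta> - (\<Delta> - K) \<in> sets \<nu>" by (simp only: sets_nu)
  moreover have "K \<subseteq> \<Delta>" using closedin_subset[OF assms] topspace_T by simp
  ultimately show ?thesis by (simp add: double_diff)
qed

lemma compact_sets: "compactin T K \<Longrightarrow> K \<in> sets \<nu>"
  using closed_sets compactin_imp_closedin[OF Hausdorff_T] by blast

lemma meas_cont: assumes "continuous_map T euclideanreal h" shows "h \<in> borel_measurable \<nu>"
proof (rule borel_measurableI)
  fix S :: "real set" assume "open S"
  then have "openin T {\<phi> \<in> topspace T. h \<phi> \<in> S}"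
    by (intro openin_continuous_map_preimage[OF assms]) auto
  moreover have "h -` S \<inter> space \<nu> = {\<phi> \<in> topspace T. h \<phi> \<in> S}" by (auto simp: space_nu topspace_T)
  ultimately show "h -` S \<inter> space \<nu> \<in> sets \<nu>" using open_sets by simp
qed

lemma meas_hat: "f \<in> B \<Longrightarrow> hat f \<in> borel_measurable \<nu>" using meas_cont cont_hat by blast

lemma integrable_mu: "f \<in> B \<Longrightarrow> integrable (ext_measure (sigma_ring_of B) mu) f"
  using inD unfolding in_D_def by blast

lemma hat_integral:
  assumes g: "g \<in> B" and gnn: "\<And>x. 0 \<le> g x" and w: "w \<in> B" and t: "t > 0"
    and sup: "\<And>\<phi>. \<phi> \<in> \<Delta> \<Longrightarrow> hat g \<phi> \<noteq> 0 \<Longrightarrow> t \<le> hat w \<phi>"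
  shows "(\<integral>\<^sup>+ \<phi>. ennreal (hat g \<phi>) \<partial>\<nu>) = ennreal (integral_mu B mu g)"
proof -
  have cg: "cfun g \<in> A" using cfun_A g by blast
  have re: "\<forall>x. Im (cfun g x) = 0 \<and> Re (cfun g x) \<ge> 0" using gnn by (simp add: cfun_def)
  have cs: "compactin T (T closure_of {\<phi>\<in>\<Delta>. \<phi> (cfun g) \<noteq> 0})" by (rule compact_support[OF w t g sup])
  have H: "\<forall>g\<in>A. (\<forall>x. Im (g x) = 0 \<and> Re (g x) \<ge> 0) \<longrightarrow>
        compactin T (T closure_of {\<phi>\<in>\<Delta>. \<phi> g \<noteq> 0}) \<longrightarrow>
        (\<forall>F::nat \<Rightarrow> 'x \<Rightarrow> real. (\<forall>n. F n \<in> B \<and> (\<forall>x. F n x \<ge> 0)) \<longrightarrow>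
           (\<forall>n x. F n x \<le> F (Suc n) x) \<longrightarrow> (\<forall>x. (\<lambda>n. F n x) \<longlonglongrightarrow> Re (g x)) \<longrightarrow>
           (\<integral>\<^sup>+ \<phi>. ennreal (Re (\<phi> g)) \<partial>\<nu>) = (SUP n. ennreal (integral_mu B mu (F n))))"
    using hatm unfolding is_hat_measure_def by blast
  have "(\<integral>\<^sup>+ \<phi>. ennreal (Re (\<phi> (cfun g))) \<partial>\<nu>) = (SUP n::nat. ennreal (integral_mu B mu g))"
    apply (rule H[rule_format, OF cg re[rule_format] cs])
    using g gnn by (auto simp: cfun_def)
  then show ?thesis by (simp add: hat_def)
qed

lemma part1: assumes f: "f \<in> B" shows "integrable \<nu> (\<lambda>\<phi>. (Re (\<phi> (cfun f)))\<^sup>2)"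
proof -
  define w where "w = (\<lambda>x. f x * f x)"
  have w: "w \<in> B" unfolding w_def using f Bmult by blast
  have hw: "hat w \<phi> = (hat f \<phi>)\<^sup>2" if "\<phi> \<in> \<Delta>" for \<phi> unfolding w_def using hat_mult[OF that f f] by (simp add: power2_eq_square)
  define gt where "gt t = (\<lambda>x. w x - t * min ((1/t) * w x) 1)" for t :: real
  have gtB: "gt t \<in> B" for t unfolding gt_def using w by (intro Bdiff Bsmult Bmin1)
  have gt_eq: "gt t x = max (w x - t) 0" if "t > 0" for t x
    using that by (auto simp: gt_def min_def max_def field_simps)
  have hgt: "hat (gt t) \<phi> = max (hat w \<phi> - t) 0" if "\<phi> \<in> \<Delta>" "t > 0" for t \<phi>
  proof -
    have "hat (gt t) \<phi> = hat w \<phi> - t * min ((1/t) * hat w \<phi>) 1"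
      unfolding gt_def using hat_diff[OF that(1) w Bsmult[OF Bmin1[OF Bsmult[OF w, of "1/t"]], of t]]
        hat_smult[OF that(1) Bmin1[OF Bsmult[OF w, of "1/t"]], of t] hat_min1[OF that(1) Bsmult[OF w, of "1/t"]]
        hat_smult[OF that(1) w, of "1/t"] by simp
    then show ?thesis using that(2) by (auto simp: min_def max_def field_simps)
  qed
  have wnn: "0 \<le> w x" for x by (simp add: w_def)
  define Cst where "Cst = ennreal (integral_mu B mu w)"
  define u where "u n = (\<lambda>\<phi>. ennreal (max (hat w \<phi> - 1 / (real n + 1)) 0))" for n
  have bound: "integral\<^sup>N \<nu> (u n) \<le> Cst" for n
  proof -
    define t where "t = 1 / (real n + 1)"
    have t: "t > 0" by (simp add: t_def)
    have "integral\<^sup>N \<nu> (u n) = (\<integral>\<^sup>+ \<phi>. ennreal (hat (gt t) \<phi>) \<partial>\<nu>)"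
      unfolding u_def t_def[symmetric] by (intro nn_integral_cong) (simp add: hgt[OF _ t] space_nu)
    also have "\<dots> = ennreal (integral_mu B mu (gt t))"
    proof (rule hat_integral[OF gtB _ w t])
      show "0 \<le> gt t x" for x using gt_eq[OF t] by simp
      show "t \<le> hat w \<phi>" if "\<phi> \<in> \<Delta>" "hat (gt t) \<phi> \<noteq> 0" for \<phi>
        using that hgt[OF that(1) t] by (auto simp: max_def split: if_splits)
    qed
    also have "\<dots> \<le> Cst" unfolding Cst_def integral_mu_def
      using gt_eq[OF t] t by (intro ennreal_leI integral_mono integrable_mu gtB w) (auto simp: max_def wnn)
    finally show ?thesis .
  qed
  have mono: "incseq u" unfolding u_def
    by (intro monoI le_funI ennreal_leI max.mono diff_left_mono) (auto simp: frac_le)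
  have meas: "u n \<in> borel_measurable \<nu>" for n unfolding u_def using meas_hat[OF w] by measurable
  have lim: "(\<lambda>n. u n \<phi>) \<longlonglongrightarrow> ennreal (max (hat w \<phi>) 0)" for \<phi>
  proof -
    have "(\<lambda>n. max (hat w \<phi> - 1 / (real n + 1)) 0) \<longlonglongrightarrow> max (hat w \<phi> - 0) 0"
      by (intro tendsto_max tendsto_diff tendsto_const lim1)
    then show ?thesis unfolding u_def by (intro tendsto_ennrealI) simp
  qed
  have "(\<lambda>n. integral\<^sup>N \<nu> (u n)) \<longlonglongrightarrow> (\<integral>\<^sup>+\<phi>. ennreal (max (hat w \<phi>) 0) \<partial>\<nu>)"
    by (rule nn_integral_LIMSEQ[OF mono meas lim])
  then have "(\<integral>\<^sup>+\<phi>. ennreal (max (hat w \<phi>) 0) \<partial>\<nu>) \<le> Cst" using bound by (intro LIMSEQ_le_const2) auto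
  also have "Cst < \<infinity>" by (simp add: Cst_def)
  finally have fin: "(\<integral>\<^sup>+\<phi>. ennreal (max (hat w \<phi>) 0) \<partial>\<nu>) < \<infinity>" .
  have eq: "(\<integral>\<^sup>+\<phi>. ennreal ((Re (\<phi> (cfun f)))\<^sup>2) \<partial>\<nu>) = (\<integral>\<^sup>+\<phi>. ennreal (max (hat w \<phi>) 0) \<partial>\<nu>)"
  proof (intro nn_integral_cong)
    fix \<phi> assume "\<phi> \<in> space \<nu>"
    then have p: "\<phi> \<in> \<Delta>" by (simp add: space_nu)
    have "max (hat w \<phi>) 0 = (Re (\<phi> (cfun f)))\<^sup>2" using hw[OF p] by (simp add: hat_def)
    then show "ennreal ((Re (\<phi> (cfun f)))\<^sup>2) = ennreal (max (hat w \<phi>) 0)" by simp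
  qed
  show ?thesis
  proof (rule integrableI_nonneg)
    have "(\<lambda>\<phi>. (hat f \<phi>)\<^sup>2) \<in> borel_measurable \<nu>" using meas_hat[OF f] by measurable
    then show "(\<lambda>\<phi>. (Re (\<phi> (cfun f)))\<^sup>2) \<in> borel_measurable \<nu>" by (simp add: hat_def)
    show "AE x in \<nu>. 0 \<le> (Re (x (cfun f)))\<^sup>2" by simp
    show "(\<integral>\<^sup>+\<phi>. ennreal ((Re (\<phi> (cfun f)))\<^sup>2) \<partial>\<nu>) < \<infinity>" using eq fin by simp
  qed
qed

end

context meas begin

lemma fin_sub: assumes "X \<in> sets \<nu>" "Y \<in> sets \<nu>" "X \<subseteq> Y" "emeasure \<nu> Y < \<infinity>"
  shows "emeasure \<nu> X = ennreal (measure \<nu> X)"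
  using assms emeasure_mono[OF assms(3) assms(2)] by (intro emeasure_eq_ennreal_measure) auto

lemma ind_approx:
  assumes A: "Aset \<in> sets \<nu>" and fin: "emeasure \<nu> Aset < \<infinity>" and e: "e > 0"
  shows "\<exists>f\<in>B. (\<integral>\<^sup>+\<phi>. ennreal ((hat f \<phi> - indicator Aset \<phi>)\<^sup>2) \<partial>\<nu>) < ennreal e"
proof -
  define \<epsilon> where "\<epsilon> = e / 2"
  have eps: "\<epsilon> > 0" using e by (simp add: \<epsilon>_def)
  have R: "radon_on T \<nu>" by (rule radon)
  have outer: "\<And>E. E \<in> sets \<nu> \<Longrightarrow> emeasure \<nu> E = (INF U\<in>{U. openin T U \<and> E \<subseteq> U}. emeasure \<nu> U)"
    using R unfolding radon_on_def by blast
  have inner: "\<And>U. openin T U \<Longrightarrow> emeasure \<nu> U = (SUP K\<in>{K. compactin T K \<and> K \<subseteq> U}. emeasure \<nu> K)"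
    using R unfolding radon_on_def by blast
  define mA where "mA = measure \<nu> Aset"
  have eA: "emeasure \<nu> Aset = ennreal mA" unfolding mA_def using fin by (intro emeasure_eq_ennreal_measure) auto
  have mA0: "0 \<le> mA" unfolding mA_def by simp
  have ADelta: "Aset \<subseteq> \<Delta>" using sets.sets_into_space[OF A] by (simp add: space_nu)
  have "emeasure \<nu> Aset < ennreal (mA + \<epsilon>)" unfolding eA using eps mA0 by (intro ennreal_lessI) auto
  then obtain U where U: "openin T U" "Aset \<subseteq> U" "emeasure \<nu> U < ennreal (mA + \<epsilon>)"
    unfolding outer[OF A] INF_less_iff by blast
  have Us: "U \<in> sets \<nu>" using open_sets[OF U(1)] .
  have Ufin: "emeasure \<nu> U < \<infinity>" unfolding infinity_ennreal_def using U(3) ennreal_less_top[of "mA + \<epsilon>"] by (rule order.strict_trans)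
  define mU where "mU = measure \<nu> U"
  have eU: "emeasure \<nu> U = ennreal mU" unfolding mU_def using Ufin by (intro emeasure_eq_ennreal_measure) auto
  have m0: "0 \<le> mU" by (simp add: mU_def)
  have "ennreal mU < ennreal (mA + \<epsilon>)" using U(3) unfolding eU .
  then have mUA: "mU < mA + \<epsilon>" using ennreal_less_iff[OF m0] by blast
  have UA: "U - Aset \<in> sets \<nu>" using Us A by auto
  have "measure \<nu> (U - Aset) = mU - mA" unfolding mU_def mA_def using Ufin fin A Us U(2)
    by (intro measure_Diff) auto
  then have "emeasure \<nu> (U - Aset) = ennreal (mU - mA)" using fin_sub[OF UA Us _ Ufin] by auto
  also have "\<dots> < ennreal \<epsilon>" using mUA eps by (intro ennreal_lessI) auto
  finally have "emeasure \<nu> (U - Aset) < ennreal \<epsilon>" .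
  then obtain V where V: "openin T V" "U - Aset \<subseteq> V" "emeasure \<nu> V < ennreal \<epsilon>"
    unfolding outer[OF UA] INF_less_iff by blast
  have Vs: "V \<in> sets \<nu>" using open_sets[OF V(1)] .
  have "\<exists>K1. compactin T K1 \<and> K1 \<subseteq> U \<and> emeasure \<nu> (U - K1) < ennreal \<epsilon>"
  proof (cases "mU < \<epsilon>")
    case True
    then show ?thesis using eU eps by (intro exI[of _ "{}"]) (auto intro: ennreal_lessI)
  next
    case False
    then have mU0: "0 < mU" using eps by simp
    have "ennreal (mU - \<epsilon>) < emeasure \<nu> U" unfolding eU using mU0 eps by (intro ennreal_lessI) auto
    then obtain K1 where K1: "compactin T K1" "K1 \<subseteq> U" "ennreal (mU - \<epsilon>) < emeasure \<nu> K1"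
      unfolding inner[OF U(1)] less_SUP_iff by blast
    have K1s: "K1 \<in> sets \<nu>" using compact_sets[OF K1(1)] .
    have "emeasure \<nu> K1 = ennreal (measure \<nu> K1)" by (rule fin_sub[OF K1s Us K1(2) Ufin])
    then have "ennreal (mU - \<epsilon>) < ennreal (measure \<nu> K1)" using K1(3) by simp
    moreover have "0 \<le> mU - \<epsilon>" using False by simp
    ultimately have lt: "mU - \<epsilon> < measure \<nu> K1" using ennreal_less_iff by blast
    have UK: "U - K1 \<in> sets \<nu>" using Us K1s by auto
    have "measure \<nu> (U - K1) = mU - measure \<nu> K1" unfolding mU_def using Ufin K1s Us K1(2)
      by (intro measure_Diff) (auto simp: less_top[symmetric] intro: le_less_trans[OF emeasure_mono[OF K1(2) Us]])
    then have "emeasure \<nu> (U - K1) = ennreal (mU - measure \<nu> K1)" using fin_sub[OF UK Us _ Ufin] by auto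
    also have "\<dots> < ennreal \<epsilon>" using lt eps by (intro ennreal_lessI) auto
    finally show ?thesis using K1 by blast
  qed
  then obtain K1 where K1: "compactin T K1" "K1 \<subseteq> U" "emeasure \<nu> (U - K1) < ennreal \<epsilon>" by blast
  define K where "K = K1 - V"
  have Kc: "compactin T K"
  proof -
    have "closedin T K1" using compactin_imp_closedin[OF Hausdorff_T K1(1)] .
    then have "closedin T (K1 - V)" using V(1) by (intro closedin_diff)
    then show ?thesis unfolding K_def using closed_compactin[OF K1(1)] by blast
  qed
  have KA: "K \<subseteq> Aset" unfolding K_def using K1(2) V(2) by blast
  have KU: "K \<subseteq> U" using KA U(2) by blast
  have Ks: "K \<in> sets \<nu>" using compact_sets[OF Kc] .
  have "emeasure \<nu> (U - K) \<le> emeasure \<nu> ((U - K1) \<union> V)"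
    using Us Vs compact_sets[OF K1(1)] unfolding K_def by (intro emeasure_mono) auto
  also have "\<dots> \<le> emeasure \<nu> (U - K1) + emeasure \<nu> V"
    using Us Vs compact_sets[OF K1(1)] by (intro emeasure_subadditive) auto
  also have "\<dots> < ennreal \<epsilon> + ennreal \<epsilon>" using K1(3) V(3) by (rule add_strict_mono)
  also have "\<dots> = ennreal e" unfolding \<epsilon>_def using e by (simp flip: ennreal_plus)
  finally have UKe: "emeasure \<nu> (U - K) < ennreal e" .
  obtain h where h: "h \<in> B" "\<forall>\<phi>\<in>\<Delta>. 0 \<le> hat h \<phi> \<and> hat h \<phi> \<le> 1" "\<forall>\<phi>\<in>K. hat h \<phi> = 1" "\<forall>\<phi>\<in>\<Delta>. \<phi> \<notin> U \<longrightarrow> hat h \<phi> = 0"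
    using urysohn[OF Kc U(1) KU] by blast
  have "(\<integral>\<^sup>+\<phi>. ennreal ((hat h \<phi> - indicator Aset \<phi>)\<^sup>2) \<partial>\<nu>) \<le> (\<integral>\<^sup>+\<phi>. indicator (U - K) \<phi> \<partial>\<nu>)"
  proof (rule nn_integral_mono)
    fix \<phi> assume "\<phi> \<in> space \<nu>"
    then have p: "\<phi> \<in> \<Delta>" by (simp add: space_nu)
    show "ennreal ((hat h \<phi> - indicator Aset \<phi>)\<^sup>2) \<le> indicator (U - K) \<phi>"
    proof (cases "\<phi> \<in> K")
      case True then show ?thesis using h(3) KA by (auto simp: indicator_def)
    next
      case False
      show ?thesis
      proof (cases "\<phi> \<in> U")
        case True
        have "\<bar>hat h \<phi> - indicator Aset \<phi>\<bar> \<le> 1"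
          using h(2) p by (auto simp: indicator_def)
        then have "(hat h \<phi> - indicator Aset \<phi>)\<^sup>2 \<le> 1" by (simp add: abs_square_le_1)
        then show ?thesis using True False by (simp add: indicator_def)
      next
        case False
        then show ?thesis using h(4) p U(2) by (auto simp: indicator_def)
      qed
    qed
  qed
  also have "\<dots> = emeasure \<nu> (U - K)" using Us Ks by simp
  finally show ?thesis using UKe h(1) by (meson le_less_trans)
qed

end


lemma ennreal_fin: "(X::ennreal) < ennreal a \<Longrightarrow> \<exists>x\<ge>0. X = ennreal x \<and> x < a"
proof -
  assume h: "X < ennreal a"
  then have "X < top" using ennreal_less_top order.strict_trans by blast
  then obtain x where x: "0 \<le> x" "X = ennreal x" using less_top_ennreal by blast
  then have "x < a" using h ennreal_less_iff by auto
  then show ?thesis using x by blast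
qed

lemma two_sum: fixes X Y :: ennreal assumes "X < ennreal a" "Y < ennreal b"
  shows "2*X + 2*Y < ennreal (2*a + 2*b)"
proof -
  obtain x where x: "0 \<le> x" "X = ennreal x" "x < a" using ennreal_fin[OF assms(1)] by blast
  obtain y where y: "0 \<le> y" "Y = ennreal y" "y < b" using ennreal_fin[OF assms(2)] by blast
  have "2*X + 2*Y = ennreal (2*x + 2*y)" using x y by (simp add: ennreal_plus ennreal_mult)
  also have "\<dots> < ennreal (2*a + 2*b)" using x y by (intro ennreal_lessI) auto
  finally show ?thesis .
qed

lemma scale_less: fixes X :: ennreal assumes "X < ennreal a" "0 < k"
  shows "ennreal k * X < ennreal (k * a)"
proof -
  obtain x where x: "0 \<le> x" "X = ennreal x" "x < a" using ennreal_fin[OF assms(1)] by blast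
  have "ennreal k * X = ennreal (k * x)" using x assms(2) by (simp add: ennreal_mult)
  also have "\<dots> < ennreal (k * a)" using x assms(2) by (intro ennreal_lessI) auto
  finally show ?thesis .
qed

lemma sq_ineq: fixes a b :: real shows "(a + b)\<^sup>2 \<le> 2 * a\<^sup>2 + 2 * b\<^sup>2"
proof -
  have "0 \<le> (a - b)\<^sup>2" by simp
  then show ?thesis by (simp add: power2_eq_square algebra_simps)
qed

lemma sq_ineq_enn: fixes a b :: real shows "ennreal ((a + b)\<^sup>2) \<le> 2 * ennreal (a\<^sup>2) + 2 * ennreal (b\<^sup>2)"
proof -
  have "ennreal ((a + b)\<^sup>2) \<le> ennreal (2 * a\<^sup>2 + 2 * b\<^sup>2)" using sq_ineq by (rule ennreal_leI)
  also have "\<dots> = 2 * ennreal (a\<^sup>2) + 2 * ennreal (b\<^sup>2)" by (simp add: ennreal_plus ennreal_mult)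
  finally show ?thesis .
qed

context meas begin

definition approx :: "((('x \<Rightarrow> complex) \<Rightarrow> complex) \<Rightarrow> real) \<Rightarrow> bool" where
  "approx g \<longleftrightarrow> (\<forall>e>0. \<exists>f\<in>B. (\<integral>\<^sup>+\<phi>. ennreal ((hat f \<phi> - g \<phi>)\<^sup>2) \<partial>\<nu>) < ennreal e)"

lemma approx_zero: "approx (\<lambda>\<phi>. 0)"
  unfolding approx_def
proof (intro allI impI)
  fix e :: real assume e: "e > 0"
  have "(\<integral>\<^sup>+\<phi>. ennreal ((hat (\<lambda>x. 0) \<phi> - 0)\<^sup>2) \<partial>\<nu>) = (\<integral>\<^sup>+\<phi>. 0 \<partial>\<nu>)"
    by (intro nn_integral_cong) (simp add: space_nu hat_zero)
  then show "\<exists>f\<in>B. (\<integral>\<^sup>+\<phi>. ennreal ((hat f \<phi> - 0)\<^sup>2) \<partial>\<nu>) < ennreal e" using e B0 by (intro bexI[of _ "\<lambda>x. 0"]) auto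
qed

lemma approx_add:
  assumes g1: "g1 \<in> borel_measurable \<nu>" and g2: "g2 \<in> borel_measurable \<nu>" and a1: "approx g1" and a2: "approx g2"
  shows "approx (\<lambda>\<phi>. g1 \<phi> + g2 \<phi>)"
  unfolding approx_def
proof (intro allI impI)
  fix e :: real assume e: "e > 0"
  obtain f1 where f1: "f1 \<in> B" "(\<integral>\<^sup>+\<phi>. ennreal ((hat f1 \<phi> - g1 \<phi>)\<^sup>2) \<partial>\<nu>) < ennreal (e/4)"
    using a1 e unfolding approx_def by (meson divide_pos_pos zero_less_numeral)
  obtain f2 where f2: "f2 \<in> B" "(\<integral>\<^sup>+\<phi>. ennreal ((hat f2 \<phi> - g2 \<phi>)\<^sup>2) \<partial>\<nu>) < ennreal (e/4)"
    using a2 e unfolding approx_def by (meson divide_pos_pos zero_less_numeral)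
  note [measurable] = meas_hat[OF f1(1)] meas_hat[OF f2(1)] g1 g2
  define f where "f = (\<lambda>x. f1 x + f2 x)"
  have f: "f \<in> B" unfolding f_def using f1 f2 Badd by blast
  have "(\<integral>\<^sup>+\<phi>. ennreal ((hat f \<phi> - (g1 \<phi> + g2 \<phi>))\<^sup>2) \<partial>\<nu>) \<le>
      (\<integral>\<^sup>+\<phi>. (2 * ennreal ((hat f1 \<phi> - g1 \<phi>)\<^sup>2) + 2 * ennreal ((hat f2 \<phi> - g2 \<phi>)\<^sup>2)) \<partial>\<nu>)"
  proof (rule nn_integral_mono)
    fix \<phi> assume "\<phi> \<in> space \<nu>"
    then have p: "\<phi> \<in> \<Delta>" by (simp add: space_nu)
    have "hat f \<phi> - (g1 \<phi> + g2 \<phi>) = (hat f1 \<phi> - g1 \<phi>) + (hat f2 \<phi> - g2 \<phi>)"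
      unfolding f_def using hat_add[OF p f1(1) f2(1)] by simp
    then show "ennreal ((hat f \<phi> - (g1 \<phi> + g2 \<phi>))\<^sup>2) \<le> 2 * ennreal ((hat f1 \<phi> - g1 \<phi>)\<^sup>2) + 2 * ennreal ((hat f2 \<phi> - g2 \<phi>)\<^sup>2)"
      using sq_ineq_enn[of "hat f1 \<phi> - g1 \<phi>" "hat f2 \<phi> - g2 \<phi>"] by (simp only:)
  qed
  also have "\<dots> = 2 * (\<integral>\<^sup>+\<phi>. ennreal ((hat f1 \<phi> - g1 \<phi>)\<^sup>2) \<partial>\<nu>) + 2 * (\<integral>\<^sup>+\<phi>. ennreal ((hat f2 \<phi> - g2 \<phi>)\<^sup>2) \<partial>\<nu>)"
    by (simp add: nn_integral_add nn_integral_cmult)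
  also have "\<dots> < ennreal (2 * (e/4) + 2 * (e/4))" by (rule two_sum[OF f1(2) f2(2)])
  also have "\<dots> = ennreal e" by simp
  finally show "\<exists>f\<in>B. (\<integral>\<^sup>+\<phi>. ennreal ((hat f \<phi> - (g1 \<phi> + g2 \<phi>))\<^sup>2) \<partial>\<nu>) < ennreal e" using f by blast
qed

lemma approx_scale:
  assumes g: "g \<in> borel_measurable \<nu>" and a: "approx g"
  shows "approx (\<lambda>\<phi>. c * g \<phi>)"
proof (cases "c = 0")
  case True then show ?thesis using approx_zero by simp
next
  case False
  then have c2: "c\<^sup>2 > 0" by simp
  show ?thesis unfolding approx_def
  proof (intro allI impI)
    fix e :: real assume e: "e > 0"
    obtain f where f: "f \<in> B" "(\<integral>\<^sup>+\<phi>. ennreal ((hat f \<phi> - g \<phi>)\<^sup>2) \<partial>\<nu>) < ennreal (e / c\<^sup>2)"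
      using a e c2 unfolding approx_def by (meson divide_pos_pos)
    note [measurable] = meas_hat[OF f(1)] g
    define f' where "f' = (\<lambda>x. c * f x)"
    have f': "f' \<in> B" unfolding f'_def using f Bsmult by blast
    have "(\<integral>\<^sup>+\<phi>. ennreal ((hat f' \<phi> - c * g \<phi>)\<^sup>2) \<partial>\<nu>) = (\<integral>\<^sup>+\<phi>. ennreal (c\<^sup>2) * ennreal ((hat f \<phi> - g \<phi>)\<^sup>2) \<partial>\<nu>)"
    proof (rule nn_integral_cong)
      fix \<phi> assume "\<phi> \<in> space \<nu>"
      then have p: "\<phi> \<in> \<Delta>" by (simp add: space_nu)
      have "(hat f' \<phi> - c * g \<phi>)\<^sup>2 = c\<^sup>2 * (hat f \<phi> - g \<phi>)\<^sup>2"
        unfolding f'_def hat_smult[OF p f(1)] by (simp add: power2_eq_square algebra_simps)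
      then show "ennreal ((hat f' \<phi> - c * g \<phi>)\<^sup>2) = ennreal (c\<^sup>2) * ennreal ((hat f \<phi> - g \<phi>)\<^sup>2)"
        by (simp add: ennreal_mult)
    qed
    also have "\<dots> = ennreal (c\<^sup>2) * (\<integral>\<^sup>+\<phi>. ennreal ((hat f \<phi> - g \<phi>)\<^sup>2) \<partial>\<nu>)"
      by (simp add: nn_integral_cmult)
    also have "\<dots> < ennreal (c\<^sup>2 * (e / c\<^sup>2))" by (rule scale_less[OF f(2) c2])
    also have "\<dots> = ennreal e" using c2 by simp
    finally show "\<exists>f\<in>B. (\<integral>\<^sup>+\<phi>. ennreal ((hat f \<phi> - c * g \<phi>)\<^sup>2) \<partial>\<nu>) < ennreal e" using f' by blast
  qed
qed

end

context meas begin

lemma approx_nonneg: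
  assumes u: "u \<in> borel_measurable \<nu>" "\<And>x. 0 \<le> u x"
  shows "(\<integral>\<^sup>+\<phi>. ennreal ((u \<phi>)\<^sup>2) \<partial>\<nu>) < \<infinity> \<longrightarrow> approx u"
  using u
proof (induction u rule: borel_measurable_induct_real)
  case (set A)
  show ?case
  proof
    assume fin: "(\<integral>\<^sup>+\<phi>. ennreal ((indicator A \<phi>)\<^sup>2) \<partial>\<nu>) < \<infinity>"
    have "(\<integral>\<^sup>+\<phi>. ennreal ((indicator A \<phi>)\<^sup>2) \<partial>\<nu>) = (\<integral>\<^sup>+\<phi>. indicator A \<phi> \<partial>\<nu>)"
      by (intro nn_integral_cong) (simp add: indicator_def)
    also have "\<dots> = emeasure \<nu> A" using set by simp
    finally have "emeasure \<nu> A < \<infinity>" using fin by simp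
    then show "approx (indicator A)" unfolding approx_def using ind_approx[OF set] by blast
  qed
next
  case (mult u c)
  show ?case
  proof
    assume fin: "(\<integral>\<^sup>+\<phi>. ennreal ((c * u \<phi>)\<^sup>2) \<partial>\<nu>) < \<infinity>"
    show "approx (\<lambda>x. c * u x)"
    proof (cases "c = 0")
      case True then show ?thesis using approx_zero by simp
    next
      case False
      note [measurable] = mult(2)
      have m: "(\<lambda>\<phi>. ennreal ((u \<phi>)\<^sup>2)) \<in> borel_measurable \<nu>" by measurable
      have "(\<integral>\<^sup>+\<phi>. ennreal ((c * u \<phi>)\<^sup>2) \<partial>\<nu>) = (\<integral>\<^sup>+\<phi>. ennreal (c\<^sup>2) * ennreal ((u \<phi>)\<^sup>2) \<partial>\<nu>)"
        by (intro nn_integral_cong) (simp add: power_mult_distrib ennreal_mult)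
      also have "\<dots> = ennreal (c\<^sup>2) * (\<integral>\<^sup>+\<phi>. ennreal ((u \<phi>)\<^sup>2) \<partial>\<nu>)" by (rule nn_integral_cmult[OF m])
      finally have "ennreal (c\<^sup>2) * (\<integral>\<^sup>+\<phi>. ennreal ((u \<phi>)\<^sup>2) \<partial>\<nu>) < top" using fin by simp
      moreover have "ennreal (c\<^sup>2) \<noteq> 0" using False by simp
      ultimately have "(\<integral>\<^sup>+\<phi>. ennreal ((u \<phi>)\<^sup>2) \<partial>\<nu>) < \<infinity>" by (auto simp: ennreal_mult_less_top)
      then have "approx u" using mult(4) by blast
      then show ?thesis using approx_scale[OF mult(2)] by blast
    qed
  qed
next
  case (add u v)
  show ?case
  proof
    assume fin: "(\<integral>\<^sup>+\<phi>. ennreal ((v \<phi> + u \<phi>)\<^sup>2) \<partial>\<nu>) < \<infinity>"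
    have "(\<integral>\<^sup>+\<phi>. ennreal ((u \<phi>)\<^sup>2) \<partial>\<nu>) \<le> (\<integral>\<^sup>+\<phi>. ennreal ((v \<phi> + u \<phi>)\<^sup>2) \<partial>\<nu>)"
      using add(2,4) by (intro nn_integral_mono ennreal_leI power_mono) (auto simp: add_increasing)
    then have au: "approx u" using add(6) fin by (meson le_less_trans)
    have "(\<integral>\<^sup>+\<phi>. ennreal ((v \<phi>)\<^sup>2) \<partial>\<nu>) \<le> (\<integral>\<^sup>+\<phi>. ennreal ((v \<phi> + u \<phi>)\<^sup>2) \<partial>\<nu>)"
      using add(2,4) by (intro nn_integral_mono ennreal_leI power_mono) (auto simp: add_increasing2)
    then have av: "approx v" using add(7) fin by (meson le_less_trans)
    show "approx (\<lambda>x. v x + u x)" by (rule approx_add[OF add(3) add(1) av au])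
  qed
next
  case (seq U)
  note [measurable] = seq(1) u(1)
  show ?case
  proof
    assume fin: "(\<integral>\<^sup>+\<phi>. ennreal ((u \<phi>)\<^sup>2) \<partial>\<nu>) < \<infinity>"
    have le: "U i x \<le> u x" if x: "x \<in> space \<nu>" for i x
    proof (rule LIMSEQ_le_const[OF seq(4)[OF x]])
      show "\<exists>N. \<forall>n\<ge>N. U i x \<le> U n x" using seq(3) by (auto simp: incseq_def le_fun_def)
    qed
    have aU: "approx (U i)" for i
    proof -
      have "(\<integral>\<^sup>+\<phi>. ennreal ((U i \<phi>)\<^sup>2) \<partial>\<nu>) \<le> (\<integral>\<^sup>+\<phi>. ennreal ((u \<phi>)\<^sup>2) \<partial>\<nu>)"
        using le seq(2) by (intro nn_integral_mono ennreal_leI power_mono) auto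
      then show ?thesis using seq(5)[of i] fin by (meson le_less_trans)
    qed
    have conv: "(\<lambda>i. \<integral>\<^sup>+\<phi>. ennreal ((U i \<phi> - u \<phi>)\<^sup>2) \<partial>\<nu>) \<longlonglongrightarrow> (\<integral>\<^sup>+\<phi>. 0 \<partial>\<nu>)"
    proof (rule nn_integral_dominated_convergence[where w="\<lambda>\<phi>. ennreal ((u \<phi>)\<^sup>2)"])
      show "(\<lambda>\<phi>. ennreal ((U i \<phi> - u \<phi>)\<^sup>2)) \<in> borel_measurable \<nu>" for i by measurable
      show "(\<lambda>\<phi>. 0::ennreal) \<in> borel_measurable \<nu>" by measurable
      show "(\<lambda>\<phi>. ennreal ((u \<phi>)\<^sup>2)) \<in> borel_measurable \<nu>" by measurable
      show "AE x in \<nu>. ennreal ((U j x - u x)\<^sup>2) \<le> ennreal ((u x)\<^sup>2)" for j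
      proof (rule AE_I2)
        fix x assume x: "x \<in> space \<nu>"
        have "(U j x - u x)\<^sup>2 = (u x - U j x)\<^sup>2" by (simp add: power2_commute)
        also have "\<dots> \<le> (u x)\<^sup>2" using le[OF x, of j] seq(2)[of j x] by (intro power_mono) auto
        finally show "ennreal ((U j x - u x)\<^sup>2) \<le> ennreal ((u x)\<^sup>2)" by (rule ennreal_leI)
      qed
      show "(\<integral>\<^sup>+\<phi>. ennreal ((u \<phi>)\<^sup>2) \<partial>\<nu>) < \<infinity>" by (rule fin)
      show "AE x in \<nu>. (\<lambda>i. ennreal ((U i x - u x)\<^sup>2)) \<longlonglongrightarrow> 0"
      proof (rule AE_I2)
        fix x assume x: "x \<in> space \<nu>"
        have "(\<lambda>i. (U i x - u x)\<^sup>2) \<longlonglongrightarrow> (u x - u x)\<^sup>2" by (intro tendsto_intros seq(4)[OF x])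
        then have "(\<lambda>i. ennreal ((U i x - u x)\<^sup>2)) \<longlonglongrightarrow> ennreal ((u x - u x)\<^sup>2)" by (rule tendsto_ennrealI)
        then show "(\<lambda>i. ennreal ((U i x - u x)\<^sup>2)) \<longlonglongrightarrow> 0" by simp
      qed
    qed
    show "approx u" unfolding approx_def
    proof (intro allI impI)
      fix e :: real assume e: "e > 0"
      have "(\<lambda>i. \<integral>\<^sup>+\<phi>. ennreal ((U i \<phi> - u \<phi>)\<^sup>2) \<partial>\<nu>) \<longlonglongrightarrow> 0" using conv by simp
      moreover have "(0::ennreal) < ennreal (e/4)" using e by simp
      ultimately have "eventually (\<lambda>i. (\<integral>\<^sup>+\<phi>. ennreal ((U i \<phi> - u \<phi>)\<^sup>2) \<partial>\<nu>) < ennreal (e/4)) sequentially"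
        by (rule order_tendstoD(2))
      then obtain i where i: "(\<integral>\<^sup>+\<phi>. ennreal ((U i \<phi> - u \<phi>)\<^sup>2) \<partial>\<nu>) < ennreal (e/4)"
        by (auto simp: eventually_sequentially)
      obtain f where f: "f \<in> B" "(\<integral>\<^sup>+\<phi>. ennreal ((hat f \<phi> - U i \<phi>)\<^sup>2) \<partial>\<nu>) < ennreal (e/4)"
        using aU[of i] e unfolding approx_def by (meson divide_pos_pos zero_less_numeral)
      note [measurable] = meas_hat[OF f(1)]
      have "(\<integral>\<^sup>+\<phi>. ennreal ((hat f \<phi> - u \<phi>)\<^sup>2) \<partial>\<nu>) \<le>
          (\<integral>\<^sup>+\<phi>. (2 * ennreal ((hat f \<phi> - U i \<phi>)\<^sup>2) + 2 * ennreal ((U i \<phi> - u \<phi>)\<^sup>2)) \<partial>\<nu>)"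
      proof (rule nn_integral_mono)
        fix \<phi> assume "\<phi> \<in> space \<nu>"
        have "hat f \<phi> - u \<phi> = (hat f \<phi> - U i \<phi>) + (U i \<phi> - u \<phi>)" by simp
        then show "ennreal ((hat f \<phi> - u \<phi>)\<^sup>2) \<le> 2 * ennreal ((hat f \<phi> - U i \<phi>)\<^sup>2) + 2 * ennreal ((U i \<phi> - u \<phi>)\<^sup>2)"
          using sq_ineq_enn[of "hat f \<phi> - U i \<phi>" "U i \<phi> - u \<phi>"] by (simp only:)
      qed
      also have "\<dots> = 2 * (\<integral>\<^sup>+\<phi>. ennreal ((hat f \<phi> - U i \<phi>)\<^sup>2) \<partial>\<nu>) + 2 * (\<integral>\<^sup>+\<phi>. ennreal ((U i \<phi> - u \<phi>)\<^sup>2) \<partial>\<nu>)"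
        by (simp add: nn_integral_add nn_integral_cmult)
      also have "\<dots> < ennreal (2 * (e/4) + 2 * (e/4))" by (rule two_sum[OF f(2) i])
      also have "\<dots> = ennreal e" by simp
      finally show "\<exists>f\<in>B. (\<integral>\<^sup>+\<phi>. ennreal ((hat f \<phi> - u \<phi>)\<^sup>2) \<partial>\<nu>) < ennreal e" using f(1) by blast
    qed
  qed
qed

lemma approx_L2:
  assumes g: "g \<in> borel_measurable \<nu>" and i: "integrable \<nu> (\<lambda>\<phi>. (g \<phi>)\<^sup>2)"
  shows "approx g"
proof -
  note [measurable] = g
  define gp where "gp = (\<lambda>\<phi>. max (g \<phi>) 0)"
  define gm where "gm = (\<lambda>\<phi>. max (- g \<phi>) 0)"
  have mp: "gp \<in> borel_measurable \<nu>" unfolding gp_def by measurable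
  have mm: "gm \<in> borel_measurable \<nu>" unfolding gm_def by measurable
  have fin: "(\<integral>\<^sup>+\<phi>. ennreal ((g \<phi>)\<^sup>2) \<partial>\<nu>) < \<infinity>" using integrableD(2)[OF i] by (simp add: less_top)
  have "(\<integral>\<^sup>+\<phi>. ennreal ((gp \<phi>)\<^sup>2) \<partial>\<nu>) \<le> (\<integral>\<^sup>+\<phi>. ennreal ((g \<phi>)\<^sup>2) \<partial>\<nu>)"
    by (intro nn_integral_mono ennreal_leI) (auto simp: gp_def max_def)
  then have ap: "approx gp" using approx_nonneg[OF mp] fin by (auto simp: gp_def)
  have "(\<integral>\<^sup>+\<phi>. ennreal ((gm \<phi>)\<^sup>2) \<partial>\<nu>) \<le> (\<integral>\<^sup>+\<phi>. ennreal ((g \<phi>)\<^sup>2) \<partial>\<nu>)"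
    by (intro nn_integral_mono ennreal_leI) (auto simp: gm_def max_def)
  then have am: "approx gm" using approx_nonneg[OF mm] fin by (auto simp: gm_def)
  have "approx (\<lambda>\<phi>. (-1) * gm \<phi>)" by (rule approx_scale[OF mm am])
  moreover have "(\<lambda>\<phi>. (-1) * gm \<phi>) \<in> borel_measurable \<nu>" using mm by measurable
  ultimately have "approx (\<lambda>\<phi>. gp \<phi> + (-1) * gm \<phi>)" by (intro approx_add[OF mp] ap)
  moreover have "(\<lambda>\<phi>. gp \<phi> + (-1) * gm \<phi>) = g" by (auto simp: gp_def gm_def fun_eq_iff max_def)
  ultimately show ?thesis by simp
qed

end

theorem mainTheorem10:
  fixes B :: "('x \<Rightarrow> real) set"
    and mu :: "'x set \<Rightarrow> ennreal"
    and \<nu> :: "(('x \<Rightarrow> complex) \<Rightarrow> complex) measure"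
  assumes "admissible_space B"
    and "in_D B mu"
    and "is_hat_measure B mu \<nu>"
  shows "(\<forall>f\<in>B. integrable \<nu> (\<lambda>\<phi>. (Re (\<phi> (cfun f)))\<^sup>2)) \<and>
         (\<forall>g \<in> borel_measurable \<nu>. integrable \<nu> (\<lambda>\<phi>. (g \<phi>)\<^sup>2) \<longrightarrow>
            (\<forall>e>0. \<exists>f\<in>B. (\<integral>\<^sup>+ \<phi>. ennreal ((Re (\<phi> (cfun f)) - g \<phi>)\<^sup>2) \<partial>\<nu>) < ennreal e))"
proof -
  interpret M: meas B mu \<nu> using assms by (simp add: meas_def adm_def meas_axioms_def)
  have 1: "\<forall>f\<in>B. integrable \<nu> (\<lambda>\<phi>. (Re (\<phi> (cfun f)))\<^sup>2)" using M.part1 by blast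
  have 2: "\<forall>e>0. \<exists>f\<in>B. (\<integral>\<^sup>+ \<phi>. ennreal ((Re (\<phi> (cfun f)) - g \<phi>)\<^sup>2) \<partial>\<nu>) < ennreal e"
    if g: "g \<in> borel_measurable \<nu>" and i: "integrable \<nu> (\<lambda>\<phi>. (g \<phi>)\<^sup>2)" for g
    using M.approx_L2[OF g i] unfolding M.approx_def M.hat_def .
  show ?thesis using 1 2 by blast
qed


end
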